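(* Let $g:\mathbb{R}^n\to\mathbb{R}^m$ be twice continuously differentiable, $K\subseteq\mathbb{R}^m$ closed, $C:=g^{-1}(K)$, $\bar x\in C$, $d\in T_C(\bar x)$, and assume MSCQ holds at $\bar x$ in direction $d$ for the system $g(x)\in K$ with modulus $\kappa$. Then for all $v\in T_C^{''}(\bar x;d)$, $$N_{T_C^{''}(\bar x;d)}(v)\subseteq\{z\mid \exists\lambda\in N_{T_K^{''}(g(\bar x);\nabla g(\bar x)d)}(\nabla g(\bar x)v)\cap\kappa\|z\|B_{\mathbb{R}^m}\text{ with } z=\nabla g(\bar x)^T\lambda\},$$ and for all $w\in T_C^2(\bar x;d)$, $$N_{T_C^{2}(\bar x;d)}(w)\subseteq\{z\mid \exists\lambda\in N_{T_K^{2}(g(\bar x);\nabla g(\bar x)d)}(\nabla g(\bar x)w+\nabla^2g(\bar x)(d,d))\cap\kappa\|z\|B_{\mathbb{R}^m}\text{ with } z=\nabla g(\bar x)^T\lambda\}.$$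
   Context: $N_A$ denotes the limiting (Mordukhovich) normal cone. $T_S^2(\bar x;d):=\{w\mid \exists t_k\downarrow 0,\ w_k\to w,\ \bar x+t_kd+\tfrac12 t_k^2w_k\in S\}$; $T_S^{''}(\bar x;d):=\{w\mid \exists (t_k,r_k)\downarrow(0,0),\ w_k\to w,\ t_k/r_k\to0,\ \bar x+t_kd+\tfrac12 t_kr_kw_k\in S\}$. $\nabla^2g(\bar x)(d,d):=(d^T\nabla^2g_i(\bar x)d)_{i=1}^m$. Directional neighborhood $V_{\rho,\delta}(d):=\{w\in\delta B_{\mathbb{R}^n}\mid \|\,\|d\|w-\|w\|d\,\|\le\rho\|w\|\|d\|\}$. MSCQ at $\bar x$ in direction $d$ means there are $\rho,\delta,\kappa>0$ with $\mathrm{dist}(x,g^{-1}(K))\le\kappa\,\mathrm{dist}(g(x),K)$ for all $x\in\bar x+V_{\rho,\delta}(d)$; the modulus is the infimum of such $\kappa$. *)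

theory Defs
  imports "HOL-Analysis.Analysis"
begin

definition tangent_cone :: "'a::real_normed_vector set \<Rightarrow> 'a \<Rightarrow> 'a set" where
  "tangent_cone S x = {d. \<exists>t u. (\<forall>k. t k > 0) \<and> t \<longlonglongrightarrow> 0 \<and> u \<longlonglongrightarrow> d
      \<and> (\<forall>k. x + t k *\<^sub>R u k \<in> S)}"

definition second_tangent_set :: "'a::real_normed_vector set \<Rightarrow> 'a \<Rightarrow> 'a \<Rightarrow> 'a set" where
  "second_tangent_set S x d = {w. \<exists>t w'. (\<forall>k. t k > 0) \<and> t \<longlonglongrightarrow> 0 \<and> w' \<longlonglongrightarrow> w
      \<and> (\<forall>k. x + t k *\<^sub>R d + (1/2 * (t k)\<^sup>2) *\<^sub>R w' k \<in> S)}"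

definition asym_second_tangent_cone :: "'a::real_normed_vector set \<Rightarrow> 'a \<Rightarrow> 'a \<Rightarrow> 'a set" where
  "asym_second_tangent_cone S x d = {w. \<exists>t r w'. (\<forall>k. t k > 0) \<and> (\<forall>k. r k > 0)
      \<and> t \<longlonglongrightarrow> 0 \<and> r \<longlonglongrightarrow> 0 \<and> (\<lambda>k. t k / r k) \<longlonglongrightarrow> 0 \<and> w' \<longlonglongrightarrow> w
      \<and> (\<forall>k. x + t k *\<^sub>R d + (1/2 * t k * r k) *\<^sub>R w' k \<in> S)}"

definition regular_normal_cone :: "'a::real_inner set \<Rightarrow> 'a \<Rightarrow> 'a set" where
  "regular_normal_cone S x = (if x \<in> S then {v. \<forall>\<epsilon>>0. \<exists>\<delta>>0. \<forall>y\<in>S.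
      norm (y - x) < \<delta> \<longrightarrow> inner v (y - x) \<le> \<epsilon> * norm (y - x)} else {})"

definition limiting_normal_cone :: "'a::real_inner set \<Rightarrow> 'a \<Rightarrow> 'a set" where
  "limiting_normal_cone S x = (if x \<in> S then {v. \<exists>xs vs. (\<forall>k. xs k \<in> S) \<and> xs \<longlonglongrightarrow> x
      \<and> vs \<longlonglongrightarrow> v \<and> (\<forall>k. vs k \<in> regular_normal_cone S (xs k))} else {})"

definition dir_nbhd :: "real \<Rightarrow> real \<Rightarrow> 'a::real_normed_vector \<Rightarrow> 'a set" where
  "dir_nbhd \<rho> \<delta> d = {w \<in> cball 0 \<delta>. norm (norm d *\<^sub>R w - norm w *\<^sub>R d) \<le> \<rho> * norm w * norm d}"

definition mscq_constants :: "('a::real_normed_vector \<Rightarrow> 'b::real_normed_vector) \<Rightarrow> 'b set \<Rightarrow> 'a \<Rightarrow> 'a \<Rightarrow> real set" where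
  "mscq_constants g K xbar d = {\<kappa>. \<kappa> > 0 \<and> (\<exists>\<rho>>0. \<exists>\<delta>>0. \<forall>w\<in>dir_nbhd \<rho> \<delta> d.
      infdist (xbar + w) (g -` K) \<le> \<kappa> * infdist (g (xbar + w)) K)}"

definition mscq_dir :: "('a::real_normed_vector \<Rightarrow> 'b::real_normed_vector) \<Rightarrow> 'b set \<Rightarrow> 'a \<Rightarrow> 'a \<Rightarrow> bool" where
  "mscq_dir g K xbar d \<longleftrightarrow> mscq_constants g K xbar d \<noteq> {}"

definition mscq_modulus :: "('a::real_normed_vector \<Rightarrow> 'b::real_normed_vector) \<Rightarrow> 'b set \<Rightarrow> 'a \<Rightarrow> 'a \<Rightarrow> real" where
  "mscq_modulus g K xbar d = Inf (mscq_constants g K xbar d)"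

end

theory Submission
  imports Defs
begin


lemma reg_imp_lim:
  assumes "l \<in> regular_normal_cone Q w"
  shows "l \<in> limiting_normal_cone Q w"
proof -
  have wQ: "w \<in> Q" using assms unfolding regular_normal_cone_def by (auto split: if_splits)
  show ?thesis unfolding limiting_normal_cone_def
    apply (simp add: wQ)
    using wQ assms by (intro exI[of _ "\<lambda>_. w"] conjI exI[of _ "\<lambda>_. l"]) auto
qed

lemma seq_close_tendsto:
  fixes a b :: "nat \<Rightarrow> 'a::real_normed_vector"
  assumes "\<And>k. norm (a k - b k) \<le> e k" "e \<longlonglongrightarrow> 0" "b \<longlonglongrightarrow> l"
  shows "a \<longlonglongrightarrow> l"
proof -
  have "(\<lambda>k. a k - b k) \<longlonglongrightarrow> 0"
  proof (rule Lim_null_comparison[OF _ assms(2)])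
    show "eventually (\<lambda>k. norm (a k - b k) \<le> e k) sequentially"
      using assms(1) by (intro always_eventually allI)
  qed
  then have "(\<lambda>k. (a k - b k) + b k) \<longlonglongrightarrow> 0 + l" using assms(3) by (intro tendsto_add)
  then show ?thesis by simp
qed

lemma lnc_graph:
  fixes Q :: "'b::euclidean_space set"
  assumes Qc: "closed Q" and p: "p \<longlonglongrightarrow> p0" and lk: "\<And>k. lam k \<in> limiting_normal_cone Q (p k)"
    and lt: "lam \<longlonglongrightarrow> l0"
  shows "l0 \<in> limiting_normal_cone Q p0"
proof -
  have pQ: "p k \<in> Q" for k using lk[of k] unfolding limiting_normal_cone_def by (auto split: if_splits)
  have p0Q: "p0 \<in> Q" using Qc pQ p closed_sequentially by blast
  have "\<exists>x v. x \<in> Q \<and> norm (x - p k) \<le> 1 / Suc k \<and> norm (v - lam k) \<le> 1 / Suc k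
            \<and> v \<in> regular_normal_cone Q x" for k
  proof -
    obtain xs vs where h: "\<forall>j. xs j \<in> Q" "xs \<longlonglongrightarrow> p k" "vs \<longlonglongrightarrow> lam k"
      "\<forall>j. vs j \<in> regular_normal_cone Q (xs j)"
      using lk[of k] pQ[of k] unfolding limiting_normal_cone_def by auto
    have e: "(0::real) < 1 / Suc k" by simp
    have "eventually (\<lambda>j. dist (xs j) (p k) < 1 / Suc k) sequentially"
      using h(2) e by (rule tendstoD)
    moreover have "eventually (\<lambda>j. dist (vs j) (lam k) < 1 / Suc k) sequentially"
      using h(3) e by (rule tendstoD)
    ultimately have "eventually (\<lambda>j. dist (xs j) (p k) < 1 / Suc k \<and> dist (vs j) (lam k) < 1 / Suc k) sequentially"
      by (rule eventually_conj)
    then obtain j where "dist (xs j) (p k) < 1 / Suc k" "dist (vs j) (lam k) < 1 / Suc k"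
      unfolding eventually_sequentially by blast
    then show ?thesis using h(1,4) by (intro exI[of _ "xs j"] exI[of _ "vs j"]) (auto simp: dist_norm)
  qed
  then obtain X where "\<forall>k. \<exists>v. X k \<in> Q \<and> norm (X k - p k) \<le> 1 / Suc k \<and> norm (v - lam k) \<le> 1 / Suc k
            \<and> v \<in> regular_normal_cone Q (X k)"
    using choice[of "\<lambda>k x. \<exists>v. x \<in> Q \<and> norm (x - p k) \<le> 1 / Suc k \<and> norm (v - lam k) \<le> 1 / Suc k
            \<and> v \<in> regular_normal_cone Q x"] by blast
  then obtain V where "\<forall>k. X k \<in> Q \<and> norm (X k - p k) \<le> 1 / Suc k \<and> norm (V k - lam k) \<le> 1 / Suc k
            \<and> V k \<in> regular_normal_cone Q (X k)"
    using choice[of "\<lambda>k v. X k \<in> Q \<and> norm (X k - p k) \<le> 1 / Suc k \<and> norm (v - lam k) \<le> 1 / Suc k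
            \<and> v \<in> regular_normal_cone Q (X k)"] by blast
  then have XV: "\<And>k. X k \<in> Q" "\<And>k. norm (X k - p k) \<le> 1 / Suc k"
    "\<And>k. norm (V k - lam k) \<le> 1 / Suc k" "\<And>k. V k \<in> regular_normal_cone Q (X k)"
    by auto
  have e0: "(\<lambda>k. 1 / real (Suc k)) \<longlonglongrightarrow> 0" by (rule LIMSEQ_inverse_real_of_nat[unfolded inverse_eq_divide])
  have "X \<longlonglongrightarrow> p0" by (rule seq_close_tendsto[OF XV(2) e0 p])
  moreover have "V \<longlonglongrightarrow> l0" by (rule seq_close_tendsto[OF XV(3) e0 lt])
  ultimately show ?thesis unfolding limiting_normal_cone_def using p0Q XV(1,4) by auto
qed

lemma lnc_closed_graph:
  fixes Q :: "'b::euclidean_space set" and A :: "'a::euclidean_space \<Rightarrow> 'b"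
  assumes lin: "linear A" and Qc: "closed Q" and p: "p \<longlonglongrightarrow> p0"
    and lk: "\<And>k. lam k \<in> limiting_normal_cone Q (p k)"
    and nb: "\<And>k. norm (lam k) \<le> M k" and M: "M \<longlonglongrightarrow> M0"
    and ad: "(\<lambda>k. adjoint A (lam k)) \<longlonglongrightarrow> u"
  shows "\<exists>l \<in> limiting_normal_cone Q p0. norm l \<le> M0 \<and> u = adjoint A l"
proof -
  obtain B where B0: "\<forall>k. norm (M k) \<le> B" using BseqE[OF convergent_imp_Bseq[OF convergentI[OF M]]] by blast
  then have B: "\<And>k. norm (M k) \<le> B" by blast
  have "norm (lam k) \<le> B" for k using nb[of k] B[of k] by simp
  then have "bounded (range lam)" unfolding bounded_iff by blast
  then obtain l r where r: "strict_mono r" "(lam \<circ> r) \<longlonglongrightarrow> l"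
    using bounded_imp_convergent_subsequence by blast
  have pr: "(p \<circ> r) \<longlonglongrightarrow> p0" using p r(1) by (rule LIMSEQ_subseq_LIMSEQ)
  have lmem: "l \<in> limiting_normal_cone Q p0"
    by (rule lnc_graph[OF Qc pr _ r(2)]) (simp add: lk)
  have Mr: "(M \<circ> r) \<longlonglongrightarrow> M0" using M r(1) by (rule LIMSEQ_subseq_LIMSEQ)
  have "(\<lambda>k. norm ((lam \<circ> r) k)) \<longlonglongrightarrow> norm l" using r(2) by (rule tendsto_norm)
  then have nl: "norm l \<le> M0"
    by (rule LIMSEQ_le[OF _ Mr]) (auto simp: nb)
  have bl: "bounded_linear (adjoint A)" using adjoint_linear[OF lin] linear_conv_bounded_linear by blast
  have "(\<lambda>k. adjoint A ((lam \<circ> r) k)) \<longlonglongrightarrow> adjoint A l"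
    using bounded_linear.tendsto[OF bl r(2)] .
  moreover have "(\<lambda>k. adjoint A ((lam \<circ> r) k)) \<longlonglongrightarrow> u"
    using LIMSEQ_subseq_LIMSEQ[OF ad r(1)] by (simp add: o_def)
  ultimately have "u = adjoint A l" using LIMSEQ_unique by blast
  then show ?thesis using lmem nl by blast
qed

lemma nearest_regular:
  fixes Q :: "'b::euclidean_space set"
  assumes wQ: "w \<in> Q" and near: "\<And>q. q \<in> Q \<Longrightarrow> dist p w \<le> dist p q" and a0: "a \<ge> 0"
  shows "a *\<^sub>R (p - w) \<in> regular_normal_cone Q w"
proof -
  have key: "inner (p - w) (q - w) \<le> (norm (q - w))\<^sup>2 / 2" if "q \<in> Q" for q
  proof -
    have ee: "(p - w) - (q - w) = p - q" by (simp add: algebra_simps)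
    have "(norm (p - w))\<^sup>2 \<le> (norm ((p - w) - (q - w)))\<^sup>2" unfolding ee using near[OF that] by (simp add: dist_norm)
    then show ?thesis by (simp add: power2_norm_eq_inner inner_diff_left inner_diff_right inner_commute)
  qed
  show ?thesis unfolding regular_normal_cone_def
  proof (simp add: wQ, intro allI impI)
    fix e :: real assume e: "0 < e"
    show "\<exists>d>0. \<forall>y\<in>Q. norm (y - w) < d \<longrightarrow> a * inner (p - w) (y - w) \<le> e * norm (y - w)"
    proof (intro exI[of _ "2 * e / (a + 1)"] conjI ballI impI)
      show "0 < 2 * e / (a + 1)" using e a0 by simp
      fix y assume yQ: "y \<in> Q" and ny: "norm (y - w) < 2 * e / (a + 1)"
      have "a * inner (p - w) (y - w) \<le> a * ((norm (y - w))\<^sup>2 / 2)"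
        using mult_left_mono[OF key[OF yQ] a0] .
      also have "\<dots> = (a * norm (y - w) / 2) * norm (y - w)" by (simp add: power2_eq_square)
      also have "\<dots> \<le> e * norm (y - w)"
      proof (rule mult_right_mono)
        have "a * norm (y - w) \<le> (a + 1) * norm (y - w)" by (simp add: distrib_right)
        also have "\<dots> \<le> (a + 1) * (2 * e / (a + 1))" using ny a0 by (intro mult_left_mono) auto
        also have "\<dots> = 2 * e" using a0 by simp
        finally show "a * norm (y - w) / 2 \<le> e" by simp
      qed simp
      finally show "a * inner (p - w) (y - w) \<le> e * norm (y - w)" .
    qed
  qed
qed




lemma prox_step:
  fixes A :: "'a::euclidean_space \<Rightarrow> 'b::euclidean_space"
  assumes lin: "linear A" and Qc: "closed Q" and Sc: "closed S"
    and EB: "\<And>y. infdist y S \<le> \<kappa> * infdist (A y + b) Q" and k0: "\<kappa> \<ge> 0"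
    and SQ: "\<And>y. y \<in> S \<Longrightarrow> A y + b \<in> Q" and vS: "v \<in> S" and c0: "c \<ge> 0"
    and prox: "\<And>y. y \<in> S \<Longrightarrow> inner u (y - v) \<le> c * (norm (y - v))\<^sup>2"
    and s0: "s > 0" and sL: "\<kappa> * norm u * s < 1/4"
  shows "\<exists>y w l. w \<in> Q \<and> l \<in> regular_normal_cone Q w \<and> norm l \<le> \<kappa> * norm u
     \<and> adjoint A l = u - (2*(4*c+1)) *\<^sub>R (y - v) \<and> (norm (y - v))\<^sup>2 \<le> \<kappa> * norm u * s
     \<and> dist w (A y + b) \<le> norm (A (y - v))"
proof -
  define L where "L = \<kappa> * norm u"
  have L0: "L \<ge> 0" using k0 by (simp add: L_def)
  have bl: "bounded_linear A" using lin linear_conv_bounded_linear by blast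
  have claim1: "inner u (y - v) \<le> L * infdist (A y + b) Q + 4*c*(norm (y-v))\<^sup>2" for y
  proof -
    obtain p where p: "p \<in> S" "infdist y S = dist y p" using infdist_attains_inf[OF Sc] vS by blast
    have d1: "dist y p \<le> dist y v" using infdist_le[OF vS, of y] p by simp
    have np: "norm (p - v) \<le> 2 * norm (y - v)"
    proof -
      have "norm (p - v) \<le> norm (p - y) + norm (y - v)" using norm_triangle_ineq[of "p - y" "y - v"] by simp
      moreover have "norm (p - y) \<le> norm (y - v)" using d1 by (simp add: dist_norm norm_minus_commute)
      ultimately show ?thesis by simp
    qed
    have "inner u (y - v) = inner u (y - p) + inner u (p - v)" by (simp add: inner_diff_right)
    also have "\<dots> \<le> norm u * norm (y - p) + c * (norm (p - v))\<^sup>2"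
      using norm_cauchy_schwarz[of u "y - p"] prox[OF p(1)] by linarith
    also have "norm u * norm (y - p) \<le> L * infdist (A y + b) Q"
    proof -
      have "norm u * norm (y - p) = norm u * infdist y S" using p(2) by (simp add: dist_norm)
      also have "\<dots> \<le> norm u * (\<kappa> * infdist (A y + b) Q)" using EB[of y] by (simp add: mult_left_mono)
      finally show ?thesis by (simp add: L_def mult.assoc mult.left_commute)
    qed
    also have "c * (norm (p - v))\<^sup>2 \<le> c * (2 * norm (y - v))\<^sup>2"
      using np c0 by (intro mult_left_mono power_mono) auto
    finally show ?thesis by (simp add: power_mult_distrib)
  qed
  define c' where "c' = 4*c+1"
  define F where "F y = L * sqrt ((infdist (A y + b) Q)\<^sup>2 + s\<^sup>2) - inner u (y - v) + c' * (norm (y - v))\<^sup>2" for y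
  have contA: "continuous_on UNIV A" using bl by (simp add: linear_continuous_on)
  have contF: "continuous_on (cball v 1) F" unfolding F_def
    by (intro continuous_intros continuous_on_subset[OF contA]) auto
  obtain y where y: "y \<in> cball v 1" "\<And>y'. y' \<in> cball v 1 \<Longrightarrow> F y \<le> F y'"
    using continuous_attains_inf[OF compact_cball _ contF] by auto
  have Fge: "(norm (y' - v))\<^sup>2 \<le> F y'" for y'
  proof -
    have "infdist (A y' + b) Q \<le> sqrt ((infdist (A y' + b) Q)\<^sup>2 + s\<^sup>2)"
      by (rule real_le_rsqrt) simp
    then have "L * infdist (A y' + b) Q \<le> L * sqrt ((infdist (A y' + b) Q)\<^sup>2 + s\<^sup>2)"
      using L0 by (rule mult_left_mono)
    then show ?thesis using claim1[of y'] unfolding F_def c'_def by (simp add: algebra_simps)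
  qed
  have Fv: "F v = L * s" using SQ[OF vS] s0 by (simp add: F_def)
  have ny: "(norm (y - v))\<^sup>2 \<le> L * s" using Fge[of y] y(2)[of v] Fv by simp
  have ny1: "norm (y - v) < 1"
  proof (rule ccontr)
    assume "\<not> norm (y - v) < 1"
    then have "1 \<le> (norm (y - v))\<^sup>2" by (simp add: one_le_power)
    then show False using ny sL by (simp add: L_def)
  qed
  have Qne: "Q \<noteq> {}" using SQ[OF vS] by blast
  obtain w where w: "w \<in> Q" "infdist (A y + b) Q = dist (A y + b) w"
    using infdist_attains_inf[OF Qc Qne] by blast
  define G where "G y' = L * sqrt (inner (A y' + b - w) (A y' + b - w) + s\<^sup>2) - inner u (y' - v) + c' * inner (y' - v) (y' - v)" for y'
  have GF: "F y' \<le> G y'" for y'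
  proof -
    have "infdist (A y' + b) Q \<le> norm (A y' + b - w)" using infdist_le[OF w(1)] by (simp add: dist_norm)
    then have "(infdist (A y' + b) Q)\<^sup>2 \<le> (norm (A y' + b - w))\<^sup>2" by (intro power_mono) (auto simp: infdist_nonneg)
    then have "sqrt ((infdist (A y' + b) Q)\<^sup>2 + s\<^sup>2) \<le> sqrt (inner (A y' + b - w) (A y' + b - w) + s\<^sup>2)"
      by (simp add: power2_norm_eq_inner)
    then show ?thesis unfolding F_def G_def using L0 by (simp add: mult_left_mono power2_norm_eq_inner)
  qed
  have GFy: "G y = F y" unfolding F_def G_def using w(2) by (simp add: dist_norm power2_norm_eq_inner)
  have locmin: "eventually (\<lambda>y'. G y \<le> G y') (at y)"
  proof -
    have "y \<in> ball v 1" using ny1 by (simp add: dist_norm norm_minus_commute)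
    then have "eventually (\<lambda>y'. y' \<in> ball v 1) (at y)"
      using eventually_at_topological by blast
    then show ?thesis
    proof (rule eventually_mono)
      fix y' assume "y' \<in> ball v 1"
      then have "F y \<le> F y'" using y(2) by auto
      then show "G y \<le> G y'" using GF[of y'] GFy by simp
    qed
  qed
  define D where "D = sqrt (inner (A y + b - w) (A y + b - w) + s\<^sup>2)"
  have pos: "inner (A y + b - w) (A y + b - w) + s\<^sup>2 > 0" using s0 by (simp add: add_nonneg_pos)
  then have D0: "D > 0" by (simp add: D_def)
  have deriv: "(G has_derivative (\<lambda>h. L * (inner (A y + b - w) (A h) / D) - inner u h + c' * (2 * inner (y - v) h))) (at y)"
    unfolding G_def D_def using pos bl
    apply (auto intro!: derivative_eq_intros bounded_linear_imp_has_derivative)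
    apply (rule ext)
    apply (simp add: inner_commute field_simps)
    done
  have zero: "(\<lambda>h. L * (inner (A y + b - w) (A h) / D) - inner u h + c' * (2 * inner (y - v) h)) = (\<lambda>h. 0)"
    by (rule has_derivative_local_min[OF deriv locmin])
  define l where "l = (L / D) *\<^sub>R (A y + b - w)"
  have l_reg: "l \<in> regular_normal_cone Q w" unfolding l_def
  proof (rule nearest_regular[OF w(1)])
    show "dist (A y + b) w \<le> dist (A y + b) q" if "q \<in> Q" for q using infdist_le[OF that, of "A y + b"] w(2) by linarith
    show "0 \<le> L / D" using L0 D0 by simp
  qed
  have l_norm: "norm l \<le> L"
  proof -
    have "norm (A y + b - w) \<le> D" unfolding D_def
      by (rule real_le_rsqrt) (simp add: power2_norm_eq_inner)
    then have "L / D * norm (A y + b - w) \<le> L / D * D" using L0 D0 by (intro mult_left_mono) auto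
    then show ?thesis using D0 L0 by (simp add: l_def)
  qed
  have adj: "adjoint A l = u - (2*c') *\<^sub>R (y - v)"
  proof -
    define e where "e = adjoint A l - (u - (2*c') *\<^sub>R (y - v))"
    have "inner h e = 0" for h
    proof -
      have z: "L * (inner (A y + b - w) (A h) / D) - inner u h + c' * (2 * inner (y - v) h) = 0"
        using fun_cong[OF zero, of h] by simp
      have "inner h (adjoint A l) = inner (A h) l" by (rule adjoint_works[OF lin])
      also have "\<dots> = L * (inner (A y + b - w) (A h) / D)" by (simp add: l_def inner_commute)
      finally show ?thesis using z by (simp add: e_def inner_diff_right algebra_simps inner_commute)
    qed
    then have "inner e e = 0" by blast
    then show ?thesis by (simp add: e_def)
  qed
  have dw: "dist w (A y + b) \<le> norm (A (y - v))"
  proof -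
    have "dist w (A y + b) = infdist (A y + b) Q" using w(2) by (simp add: dist_commute)
    also have "\<dots> \<le> dist (A y + b) (A v + b)" by (rule infdist_le[OF SQ[OF vS]])
    also have "\<dots> = norm (A (y - v))" by (simp add: dist_norm linear_diff[OF lin])
    finally show ?thesis .
  qed
  show ?thesis
    using w(1) l_reg l_norm adj ny dw by (intro exI[of _ y] exI[of _ w] exI[of _ l]) (simp add: L_def c'_def)
qed




lemma nearest_key:
  fixes p w q :: "'b::real_inner"
  assumes "dist p w \<le> dist p q"
  shows "inner (p - w) (q - w) \<le> (norm (q - w))\<^sup>2 / 2"
proof -
  have ee: "(p - w) - (q - w) = p - q" by (simp add: algebra_simps)
  have "(norm (p - w))\<^sup>2 \<le> (norm ((p - w) - (q - w)))\<^sup>2" unfolding ee using assms by (simp add: dist_norm)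
  then show ?thesis by (simp add: power2_norm_eq_inner inner_diff_left inner_diff_right inner_commute)
qed

lemma norm_add_sq:
  fixes a b :: "'a::real_inner"
  shows "(norm (a + b))\<^sup>2 = (norm a)\<^sup>2 + 2 * inner a b + (norm b)\<^sup>2"
  by (simp add: power2_norm_eq_inner inner_add_left inner_add_right inner_commute)

lemma prox_good:
  fixes A :: "'a::euclidean_space \<Rightarrow> 'b::euclidean_space"
  assumes lin: "linear A" and Qc: "closed Q" and Sc: "closed S"
    and EB: "\<And>y. infdist y S \<le> \<kappa> * infdist (A y + b) Q" and k0: "\<kappa> \<ge> 0"
    and SQ: "\<And>y. y \<in> S \<Longrightarrow> A y + b \<in> Q" and vS: "v \<in> S" and c0: "c \<ge> 0"
    and prox: "\<And>y. y \<in> S \<Longrightarrow> inner u (y - v) \<le> c * (norm (y - v))\<^sup>2"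
  shows "\<exists>l \<in> limiting_normal_cone Q (A v + b). norm l \<le> \<kappa> * norm u \<and> u = adjoint A l"
proof -
  define L where "L = \<kappa> * norm u"
  have L0: "L \<ge> 0" using k0 by (simp add: L_def)
  define s where "s k = 1 / ((4*L+4) * Suc k)" for k
  have s0: "s k > 0" for k using L0 by (simp add: s_def)
  have sL: "\<kappa> * norm u * s k < 1/4" for k
  proof -
    have "L * s k = L / ((4*L+4) * Suc k)" by (simp add: s_def)
    also have "\<dots> \<le> L / (4*L+4)" using L0 by (intro divide_left_mono) auto
    also have "\<dots> < 1/4" using L0 by (simp add: field_simps)
    finally show ?thesis by (simp add: L_def)
  qed
  have ex: "\<exists>t. fst (snd t) \<in> Q \<and> snd (snd t) \<in> regular_normal_cone Q (fst (snd t)) \<and> norm (snd (snd t)) \<le> L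
     \<and> adjoint A (snd (snd t)) = u - (2*(4*c+1)) *\<^sub>R (fst t - v) \<and> (norm (fst t - v))\<^sup>2 \<le> L * s k
     \<and> dist (fst (snd t)) (A (fst t) + b) \<le> norm (A (fst t - v))" for k
  proof -
    obtain y w l where "w \<in> Q \<and> l \<in> regular_normal_cone Q w \<and> norm l \<le> \<kappa> * norm u
     \<and> adjoint A l = u - (2*(4*c+1)) *\<^sub>R (y - v) \<and> (norm (y - v))\<^sup>2 \<le> \<kappa> * norm u * s k
     \<and> dist w (A y + b) \<le> norm (A (y - v))"
      using prox_step[OF lin Qc Sc EB k0 SQ vS c0 prox s0 sL] by blast
    then show ?thesis by (intro exI[of _ "(y,w,l)"]) (simp add: L_def)
  qed
  have ex2: "\<forall>k. \<exists>t. fst (snd t) \<in> Q \<and> snd (snd t) \<in> regular_normal_cone Q (fst (snd t)) \<and> norm (snd (snd t)) \<le> L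
     \<and> adjoint A (snd (snd t)) = u - (2*(4*c+1)) *\<^sub>R (fst t - v) \<and> (norm (fst t - v))\<^sup>2 \<le> L * s k
     \<and> dist (fst (snd t)) (A (fst t) + b) \<le> norm (A (fst t - v))"
    using ex by blast
  then obtain f where f: "\<forall>k. fst (snd (f k)) \<in> Q \<and> snd (snd (f k)) \<in> regular_normal_cone Q (fst (snd (f k))) \<and> norm (snd (snd (f k))) \<le> L
     \<and> adjoint A (snd (snd (f k))) = u - (2*(4*c+1)) *\<^sub>R (fst (f k) - v) \<and> (norm (fst (f k) - v))\<^sup>2 \<le> L * s k
     \<and> dist (fst (snd (f k))) (A (fst (f k)) + b) \<le> norm (A (fst (f k) - v))"
    using choice[OF ex2] by blast
  define Y where "Y k = fst (f k)" for k
  define W where "W k = fst (snd (f k))" for k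
  define Lm where "Lm k = snd (snd (f k))" for k
  have F: "\<And>k. Lm k \<in> regular_normal_cone Q (W k)" "\<And>k. norm (Lm k) \<le> L"
    "\<And>k. adjoint A (Lm k) = u - (2*(4*c+1)) *\<^sub>R (Y k - v)" "\<And>k. (norm (Y k - v))\<^sup>2 \<le> L * s k"
    "\<And>k. dist (W k) (A (Y k) + b) \<le> norm (A (Y k - v))"
    using f unfolding Y_def W_def Lm_def by auto
  have s_lim: "s \<longlonglongrightarrow> 0"
  proof -
    have "(\<lambda>k. (1 / (4*L+4)) * (1 / real (Suc k))) \<longlonglongrightarrow> (1 / (4*L+4)) * 0"
      by (intro tendsto_mult tendsto_const LIMSEQ_inverse_real_of_nat[unfolded inverse_eq_divide])
    moreover have "s = (\<lambda>k. (1 / (4*L+4)) * (1 / real (Suc k)))" by (rule ext) (simp add: s_def)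
    ultimately show ?thesis by simp
  qed
  have Yv: "Y \<longlonglongrightarrow> v"
  proof -
    have "(\<lambda>k. Y k - v) \<longlonglongrightarrow> 0"
    proof (rule Lim_null_comparison)
      show "\<forall>\<^sub>F k in sequentially. norm (Y k - v) \<le> sqrt (L * s k)"
        by (intro always_eventually allI real_le_rsqrt F(4))
      have "(\<lambda>k. sqrt (L * s k)) \<longlonglongrightarrow> sqrt (L * 0)"
        by (intro tendsto_intros s_lim)
      then show "(\<lambda>k. sqrt (L * s k)) \<longlonglongrightarrow> 0" by simp
    qed
    then have "(\<lambda>k. (Y k - v) + v) \<longlonglongrightarrow> 0 + v" by (intro tendsto_add tendsto_const)
    then show ?thesis by simp
  qed
  have bl: "bounded_linear A" using lin linear_conv_bounded_linear by blast
  have AY: "(\<lambda>k. A (Y k) + b) \<longlonglongrightarrow> A v + b"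
    by (intro tendsto_add tendsto_const bounded_linear.tendsto[OF bl] Yv)
  have W: "W \<longlonglongrightarrow> A v + b"
  proof (rule seq_close_tendsto[OF _ _ AY])
    show "norm (W k - (A (Y k) + b)) \<le> norm (A (Y k - v))" for k using F(5)[of k] by (simp add: dist_norm)
    have "(\<lambda>k. norm (A (Y k - v))) \<longlonglongrightarrow> norm (A (v - v))"
      by (intro tendsto_intros bounded_linear.tendsto[OF bl] Yv)
    then show "(\<lambda>k. norm (A (Y k - v))) \<longlonglongrightarrow> 0" by (simp add: linear_0[OF lin])
  qed
  have ad: "(\<lambda>k. adjoint A (Lm k)) \<longlonglongrightarrow> u"
  proof -
    have "(\<lambda>k. u - (2*(4*c+1)) *\<^sub>R (Y k - v)) \<longlonglongrightarrow> u - (2*(4*c+1)) *\<^sub>R (v - v)"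
      by (intro tendsto_intros Yv)
    then show ?thesis using F(3) by simp
  qed
  show ?thesis
    using lnc_closed_graph[OF lin Qc W _ F(2) tendsto_const ad] reg_imp_lim[OF F(1)]
    by (simp add: L_def)
qed

lemma reg_good:
  fixes A :: "'a::euclidean_space \<Rightarrow> 'b::euclidean_space"
  assumes lin: "linear A" and Qc: "closed Q" and Sc: "closed S"
    and EB: "\<And>y. infdist y S \<le> \<kappa> * infdist (A y + b) Q" and k0: "\<kappa> \<ge> 0"
    and SQ: "\<And>y. y \<in> S \<Longrightarrow> A y + b \<in> Q" and vS: "v \<in> S"
    and ureg: "u \<in> regular_normal_cone S v"
  shows "\<exists>l \<in> limiting_normal_cone Q (A v + b). norm l \<le> \<kappa> * norm u \<and> u = adjoint A l"
proof -
  define t where "t k = 1 / real (Suc k)" for k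
  have t0: "t k > 0" for k by (simp add: t_def)
  define p where "p k = v + t k *\<^sub>R u" for k
  have "\<exists>y. y \<in> S \<and> infdist (p k) S = dist (p k) y" for k
    using infdist_attains_inf[OF Sc, of "p k"] vS by blast
  then obtain Y where Y: "\<And>k. Y k \<in> S" "\<And>k. infdist (p k) S = dist (p k) (Y k)"
    using choice[of "\<lambda>k y. y \<in> S \<and> infdist (p k) S = dist (p k) y"] by blast
  define U where "U k = real (Suc k) *\<^sub>R (p k - Y k)" for k
  have near: "dist (p k) (Y k) \<le> dist (p k) y" if "y \<in> S" for k y
    using infdist_le[OF that, of "p k"] Y(2)[of k] by linarith
  have good: "\<exists>l \<in> limiting_normal_cone Q (A (Y k) + b). norm l \<le> \<kappa> * norm (U k) \<and> U k = adjoint A l" for k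
  proof (rule prox_good[OF lin Qc Sc EB k0 SQ Y(1)])
    show "0 \<le> real (Suc k) / 2" by simp
    fix y assume yS: "y \<in> S"
    have "inner (U k) (y - Y k) = real (Suc k) * inner (p k - Y k) (y - Y k)" by (simp add: U_def)
    also have "\<dots> \<le> real (Suc k) * ((norm (y - Y k))\<^sup>2 / 2)"
      by (intro mult_left_mono nearest_key near yS) simp
    finally show "inner (U k) (y - Y k) \<le> real (Suc k) / 2 * (norm (y - Y k))\<^sup>2" by simp
  qed
  then obtain Lm where Lm: "\<And>k. Lm k \<in> limiting_normal_cone Q (A (Y k) + b)"
    "\<And>k. norm (Lm k) \<le> \<kappa> * norm (U k)" "\<And>k. U k = adjoint A (Lm k)"
    using choice[of "\<lambda>k l. l \<in> limiting_normal_cone Q (A (Y k) + b) \<and> norm l \<le> \<kappa> * norm (U k) \<and> U k = adjoint A l"]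
    by blast
  have t_lim: "t \<longlonglongrightarrow> 0" unfolding t_def by (rule LIMSEQ_inverse_real_of_nat[unfolded inverse_eq_divide])
  have keyY: "(norm (Y k - v))\<^sup>2 \<le> 2 * t k * inner u (Y k - v)" for k
  proof -
    have "dist (p k) (Y k) \<le> dist (p k) v" using near[OF vS] .
    then have "norm (t k *\<^sub>R u + (v - Y k)) \<le> norm (t k *\<^sub>R u)"
      by (simp add: dist_norm p_def algebra_simps)
    then have sq: "(norm (t k *\<^sub>R u + (v - Y k)))\<^sup>2 \<le> (norm (t k *\<^sub>R u))\<^sup>2"
      by (rule power_mono) simp
    have ex: "(norm (t k *\<^sub>R u + (v - Y k)))\<^sup>2 = (norm (t k *\<^sub>R u))\<^sup>2 + 2 * inner (t k *\<^sub>R u) (v - Y k) + (norm (v - Y k))\<^sup>2"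
      by (rule norm_add_sq)
    have i1: "inner (t k *\<^sub>R u) (v - Y k) = - (t k * inner u (Y k - v))"
      by (simp add: inner_diff_right algebra_simps)
    have n1: "norm (v - Y k) = norm (Y k - v)" by (rule norm_minus_commute)
    show ?thesis using sq unfolding ex i1 n1 by linarith
  qed
  have nYv: "norm (Y k - v) \<le> 2 * t k * norm u" for k
  proof -
    have "(norm (Y k - v))\<^sup>2 \<le> 2 * t k * (norm u * norm (Y k - v))"
      using keyY[of k] mult_left_mono[OF norm_cauchy_schwarz[of u "Y k - v"], of "2 * t k"] t0[of k]
      by linarith
    then have "norm (Y k - v) * norm (Y k - v) \<le> (2 * t k * norm u) * norm (Y k - v)"
      by (simp add: power2_eq_square algebra_simps)
    then show ?thesis using t0[of k]
      by (cases "norm (Y k - v) = 0") (auto simp: mult_le_cancel_right)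
  qed
  have Yv: "Y \<longlonglongrightarrow> v"
  proof -
    have "(\<lambda>k. Y k - v) \<longlonglongrightarrow> 0"
    proof (rule Lim_null_comparison)
      show "\<forall>\<^sub>F k in sequentially. norm (Y k - v) \<le> 2 * t k * norm u"
        using nYv by (intro always_eventually allI)
      have "(\<lambda>k. 2 * t k * norm u) \<longlonglongrightarrow> 2 * 0 * norm u" by (intro tendsto_intros t_lim)
      then show "(\<lambda>k. 2 * t k * norm u) \<longlonglongrightarrow> 0" by simp
    qed
    then have "(\<lambda>k. (Y k - v) + v) \<longlonglongrightarrow> 0 + v" by (intro tendsto_add tendsto_const)
    then show ?thesis by simp
  qed
  have Uu: "U \<longlonglongrightarrow> u"
  proof (rule tendstoI)
    fix e :: real assume e: "e > 0"
    have vS': "v \<in> S" by fact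
    obtain d where d: "d > 0" "\<And>y. y \<in> S \<Longrightarrow> norm (y - v) < d \<Longrightarrow> inner u (y - v) \<le> (e/4) * norm (y - v)"
      using ureg vS e unfolding regular_normal_cone_def by (auto dest!: spec[of _ "e/4"])
    have "eventually (\<lambda>k. dist (Y k) v < d) sequentially" using Yv d(1) by (rule tendstoD)
    then show "eventually (\<lambda>k. dist (U k) u < e) sequentially"
    proof (rule eventually_mono)
      fix k assume "dist (Y k) v < d"
      then have ip: "inner u (Y k - v) \<le> (e/4) * norm (Y k - v)" using d(2)[OF Y(1)] by (simp add: dist_norm)
      have "(norm (Y k - v))\<^sup>2 \<le> 2 * t k * ((e/4) * norm (Y k - v))"
        using keyY[of k] mult_left_mono[OF ip, of "2 * t k"] t0[of k] by linarith
      then have "norm (Y k - v) * norm (Y k - v) \<le> (t k * (e/2)) * norm (Y k - v)"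
        by (simp add: power2_eq_square algebra_simps)
      then have nn: "norm (Y k - v) \<le> t k * (e/2)" using t0[of k] e
        by (cases "norm (Y k - v) = 0") (auto simp: mult_le_cancel_right)
      have "U k - u = real (Suc k) *\<^sub>R (v - Y k)" by (simp add: U_def p_def t_def algebra_simps)
      then have "norm (U k - u) = real (Suc k) * norm (Y k - v)" by (simp add: norm_minus_commute)
      also have "\<dots> \<le> real (Suc k) * (t k * (e/2))" using nn by (intro mult_left_mono) auto
      also have "\<dots> = e/2"
      proof -
        have h1: "real (Suc k) * t k = 1" by (simp add: t_def)
        have "real (Suc k) * (t k * (e/2)) = (real (Suc k) * t k) * (e/2)" by (rule mult.assoc[symmetric])
        also have "\<dots> = e/2" unfolding h1 by (rule mult_1)
        finally show ?thesis .
      qed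
      finally show "dist (U k) u < e" using e by (simp add: dist_norm)
    qed
  qed
  have bl: "bounded_linear A" using lin linear_conv_bounded_linear by blast
  have AY: "(\<lambda>k. A (Y k) + b) \<longlonglongrightarrow> A v + b"
    by (intro tendsto_add tendsto_const bounded_linear.tendsto[OF bl] Yv)
  have M: "(\<lambda>k. \<kappa> * norm (U k)) \<longlonglongrightarrow> \<kappa> * norm u" by (intro tendsto_intros Uu)
  have ad: "(\<lambda>k. adjoint A (Lm k)) \<longlonglongrightarrow> u" unfolding Lm(3)[symmetric] using Uu .
  show ?thesis by (rule lnc_closed_graph[OF lin Qc AY Lm(1) Lm(2) M ad])
qed

lemma lim_good:
  fixes A :: "'a::euclidean_space \<Rightarrow> 'b::euclidean_space"
  assumes lin: "linear A" and Qc: "closed Q" and Sc: "closed S"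
    and EB: "\<And>y. infdist y S \<le> \<kappa> * infdist (A y + b) Q" and k0: "\<kappa> \<ge> 0"
    and SQ: "\<And>y. y \<in> S \<Longrightarrow> A y + b \<in> Q"
    and ulim: "u \<in> limiting_normal_cone S v"
  shows "\<exists>l \<in> limiting_normal_cone Q (A v + b). norm l \<le> \<kappa> * norm u \<and> u = adjoint A l"
proof -
  have vS: "v \<in> S" using ulim unfolding limiting_normal_cone_def by (auto split: if_splits)
  obtain xs vs where h: "\<And>k. xs k \<in> S" "xs \<longlonglongrightarrow> v" "vs \<longlonglongrightarrow> u"
      "\<And>k. vs k \<in> regular_normal_cone S (xs k)"
    using ulim vS unfolding limiting_normal_cone_def by auto
  have "\<exists>l \<in> limiting_normal_cone Q (A (xs k) + b). norm l \<le> \<kappa> * norm (vs k) \<and> vs k = adjoint A l" for k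
    by (rule reg_good[OF lin Qc Sc EB k0 SQ h(1) h(4)])
  then obtain Lm where Lm: "\<And>k. Lm k \<in> limiting_normal_cone Q (A (xs k) + b)"
    "\<And>k. norm (Lm k) \<le> \<kappa> * norm (vs k)" "\<And>k. vs k = adjoint A (Lm k)"
    using choice[of "\<lambda>k l. l \<in> limiting_normal_cone Q (A (xs k) + b) \<and> norm l \<le> \<kappa> * norm (vs k) \<and> vs k = adjoint A l"]
    by blast
  have bl: "bounded_linear A" using lin linear_conv_bounded_linear by blast
  have AY: "(\<lambda>k. A (xs k) + b) \<longlonglongrightarrow> A v + b"
    by (intro tendsto_add tendsto_const bounded_linear.tendsto[OF bl] h(2))
  have M: "(\<lambda>k. \<kappa> * norm (vs k)) \<longlonglongrightarrow> \<kappa> * norm u" by (intro tendsto_intros h(3))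
  have ad: "(\<lambda>k. adjoint A (Lm k)) \<longlonglongrightarrow> u" unfolding Lm(3)[symmetric] using h(3) .
  show ?thesis by (rule lnc_closed_graph[OF lin Qc AY Lm(1) Lm(2) M ad])
qed




lemma inv_suc_lim: "(\<lambda>k. 1 / real (Suc k)) \<longlonglongrightarrow> 0"
  by (rule LIMSEQ_inverse_real_of_nat[unfolded inverse_eq_divide])

lemma small_pos_lim:
  fixes t :: "nat \<Rightarrow> real"
  assumes "\<And>k. 0 < t k" "\<And>k. t k < 1 / real (Suc k)"
  shows "t \<longlonglongrightarrow> 0"
proof (rule Lim_null_comparison[OF _ inv_suc_lim])
  show "\<forall>\<^sub>F k in sequentially. norm (t k) \<le> 1 / real (Suc k)"
    using assms by (intro always_eventually allI) (simp add: less_imp_le abs_of_pos)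
qed

lemma asym_char:
  "w \<in> asym_second_tangent_cone S x d \<longleftrightarrow> (\<forall>e>0. \<exists>t r w'. 0 < t \<and> t < e \<and> 0 < r \<and> r < e \<and> t / r < e
      \<and> norm (w' - w) < e \<and> x + t *\<^sub>R d + (1/2 * t * r) *\<^sub>R w' \<in> S)"
proof
  assume "w \<in> asym_second_tangent_cone S x d"
  then obtain t r w' where h: "\<forall>k. t k > 0" "\<forall>k. r k > 0" "t \<longlonglongrightarrow> 0" "r \<longlonglongrightarrow> 0"
    "(\<lambda>k. t k / r k) \<longlonglongrightarrow> 0" "w' \<longlonglongrightarrow> w" "\<forall>k. x + t k *\<^sub>R d + (1/2 * t k * r k) *\<^sub>R w' k \<in> S"
    unfolding asym_second_tangent_cone_def by blast
  show "\<forall>e>0. \<exists>t r w'. 0 < t \<and> t < e \<and> 0 < r \<and> r < e \<and> t / r < e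
      \<and> norm (w' - w) < e \<and> x + t *\<^sub>R d + (1/2 * t * r) *\<^sub>R w' \<in> S"
  proof (intro allI impI)
    fix e :: real assume e: "e > 0"
    have "eventually (\<lambda>k. dist (t k) 0 < e) sequentially" using h(3) e by (rule tendstoD)
    moreover have "eventually (\<lambda>k. dist (r k) 0 < e) sequentially" using h(4) e by (rule tendstoD)
    moreover have "eventually (\<lambda>k. dist (t k / r k) 0 < e) sequentially" using h(5) e by (rule tendstoD)
    moreover have "eventually (\<lambda>k. dist (w' k) w < e) sequentially" using h(6) e by (rule tendstoD)
    ultimately have "eventually (\<lambda>k. dist (t k) 0 < e \<and> dist (r k) 0 < e \<and> dist (t k / r k) 0 < e \<and> dist (w' k) w < e) sequentially"
      by (intro eventually_conj)
    then obtain k where k: "dist (t k) 0 < e" "dist (r k) 0 < e" "dist (t k / r k) 0 < e" "dist (w' k) w < e"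
      unfolding eventually_sequentially by blast
    show "\<exists>t r w'. 0 < t \<and> t < e \<and> 0 < r \<and> r < e \<and> t / r < e
      \<and> norm (w' - w) < e \<and> x + t *\<^sub>R d + (1/2 * t * r) *\<^sub>R w' \<in> S"
      by (rule exI[of _ "t k"], rule exI[of _ "r k"], rule exI[of _ "w' k"], insert k h(1,2,7) h(1)[rule_format, of k] h(2)[rule_format, of k], auto simp: dist_norm abs_of_pos)
  qed
next
  assume H: "\<forall>e>0. \<exists>t r w'. 0 < t \<and> t < e \<and> 0 < r \<and> r < e \<and> t / r < e
      \<and> norm (w' - w) < e \<and> x + t *\<^sub>R d + (1/2 * t * r) *\<^sub>R w' \<in> S"
  have ex: "\<exists>z. 0 < fst z \<and> fst z < 1 / real (Suc k) \<and> 0 < fst (snd z) \<and> fst (snd z) < 1 / real (Suc k)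
     \<and> fst z / fst (snd z) < 1 / real (Suc k) \<and> norm (snd (snd z) - w) < 1 / real (Suc k)
     \<and> x + fst z *\<^sub>R d + (1/2 * fst z * fst (snd z)) *\<^sub>R snd (snd z) \<in> S" for k
  proof -
    obtain t r w' where "0 < t \<and> t < 1 / real (Suc k) \<and> 0 < r \<and> r < 1 / real (Suc k) \<and> t / r < 1 / real (Suc k)
      \<and> norm (w' - w) < 1 / real (Suc k) \<and> x + t *\<^sub>R d + (1/2 * t * r) *\<^sub>R w' \<in> S"
      using H[rule_format, of "1 / real (Suc k)"] by auto
    then show ?thesis by (intro exI[of _ "(t, r, w')"]) simp
  qed
  have ex2: "\<forall>k. \<exists>z. 0 < fst z \<and> fst z < 1 / real (Suc k) \<and> 0 < fst (snd z) \<and> fst (snd z) < 1 / real (Suc k)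
     \<and> fst z / fst (snd z) < 1 / real (Suc k) \<and> norm (snd (snd z) - w) < 1 / real (Suc k)
     \<and> x + fst z *\<^sub>R d + (1/2 * fst z * fst (snd z)) *\<^sub>R snd (snd z) \<in> S"
    using ex by blast
  then obtain f where f: "\<forall>k. 0 < fst (f k) \<and> fst (f k) < 1 / real (Suc k) \<and> 0 < fst (snd (f k)) \<and> fst (snd (f k)) < 1 / real (Suc k)
     \<and> fst (f k) / fst (snd (f k)) < 1 / real (Suc k) \<and> norm (snd (snd (f k)) - w) < 1 / real (Suc k)
     \<and> x + fst (f k) *\<^sub>R d + (1/2 * fst (f k) * fst (snd (f k))) *\<^sub>R snd (snd (f k)) \<in> S"
    using choice[OF ex2] by blast
  define t where "t k = fst (f k)" for k
  define r where "r k = fst (snd (f k))" for k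
  define w' where "w' k = snd (snd (f k))" for k
  have F: "\<And>k. 0 < t k" "\<And>k. t k < 1 / real (Suc k)" "\<And>k. 0 < r k" "\<And>k. r k < 1 / real (Suc k)"
    "\<And>k. t k / r k < 1 / real (Suc k)" "\<And>k. norm (w' k - w) < 1 / real (Suc k)"
    "\<And>k. x + t k *\<^sub>R d + (1/2 * t k * r k) *\<^sub>R w' k \<in> S"
    using f unfolding t_def r_def w'_def by auto
  have "w' \<longlonglongrightarrow> w" by (rule seq_close_tendsto[OF _ inv_suc_lim tendsto_const]) (use F(6) less_imp_le in auto)
  moreover have "t \<longlonglongrightarrow> 0" by (rule small_pos_lim[OF F(1,2)])
  moreover have "r \<longlonglongrightarrow> 0" by (rule small_pos_lim[OF F(3,4)])
  moreover have "(\<lambda>k. t k / r k) \<longlonglongrightarrow> 0" by (rule small_pos_lim) (use F(1,3,5) in auto)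
  ultimately show "w \<in> asym_second_tangent_cone S x d" unfolding asym_second_tangent_cone_def
    using F(1,3,7) by blast
qed

lemma second_char:
  "w \<in> second_tangent_set S x d \<longleftrightarrow> (\<forall>e>0. \<exists>t w'. 0 < t \<and> t < e
      \<and> norm (w' - w) < e \<and> x + t *\<^sub>R d + (1/2 * t\<^sup>2) *\<^sub>R w' \<in> S)"
proof
  assume "w \<in> second_tangent_set S x d"
  then obtain t w' where h: "\<forall>k. t k > 0" "t \<longlonglongrightarrow> 0"
    "w' \<longlonglongrightarrow> w" "\<forall>k. x + t k *\<^sub>R d + (1/2 * (t k)\<^sup>2) *\<^sub>R w' k \<in> S"
    unfolding second_tangent_set_def by blast
  show "\<forall>e>0. \<exists>t w'. 0 < t \<and> t < e
      \<and> norm (w' - w) < e \<and> x + t *\<^sub>R d + (1/2 * t\<^sup>2) *\<^sub>R w' \<in> S"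
  proof (intro allI impI)
    fix e :: real assume e: "e > 0"
    have "eventually (\<lambda>k. dist (t k) 0 < e) sequentially" using h(2) e by (rule tendstoD)
    moreover have "eventually (\<lambda>k. dist (w' k) w < e) sequentially" using h(3) e by (rule tendstoD)
    ultimately have "eventually (\<lambda>k. dist (t k) 0 < e \<and> dist (w' k) w < e) sequentially"
      by (intro eventually_conj)
    then obtain k where k: "dist (t k) 0 < e" "dist (w' k) w < e"
      unfolding eventually_sequentially by blast
    show "\<exists>t w'. 0 < t \<and> t < e \<and> norm (w' - w) < e \<and> x + t *\<^sub>R d + (1/2 * t\<^sup>2) *\<^sub>R w' \<in> S"
      by (rule exI[of _ "t k"], rule exI[of _ "w' k"], insert k h(1,4), auto simp: dist_norm)
  qed
next
  assume H: "\<forall>e>0. \<exists>t w'. 0 < t \<and> t < e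
      \<and> norm (w' - w) < e \<and> x + t *\<^sub>R d + (1/2 * t\<^sup>2) *\<^sub>R w' \<in> S"
  have ex: "\<exists>z. 0 < fst z \<and> fst z < 1 / real (Suc k) \<and> norm (snd z - w) < 1 / real (Suc k)
     \<and> x + fst z *\<^sub>R d + (1/2 * (fst z)\<^sup>2) *\<^sub>R snd z \<in> S" for k
  proof -
    obtain t w' where "0 < t \<and> t < 1 / real (Suc k) \<and> norm (w' - w) < 1 / real (Suc k) \<and> x + t *\<^sub>R d + (1/2 * t\<^sup>2) *\<^sub>R w' \<in> S"
      using H[rule_format, of "1 / real (Suc k)"] by auto
    then show ?thesis by (intro exI[of _ "(t, w')"]) simp
  qed
  have ex2: "\<forall>k. \<exists>z. 0 < fst z \<and> fst z < 1 / real (Suc k) \<and> norm (snd z - w) < 1 / real (Suc k)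
     \<and> x + fst z *\<^sub>R d + (1/2 * (fst z)\<^sup>2) *\<^sub>R snd z \<in> S"
    using ex by blast
  then obtain f where f: "\<forall>k. 0 < fst (f k) \<and> fst (f k) < 1 / real (Suc k) \<and> norm (snd (f k) - w) < 1 / real (Suc k)
     \<and> x + fst (f k) *\<^sub>R d + (1/2 * (fst (f k))\<^sup>2) *\<^sub>R snd (f k) \<in> S"
    using choice[OF ex2] by blast
  define t where "t k = fst (f k)" for k
  define w' where "w' k = snd (f k)" for k
  have F: "\<And>k. 0 < t k" "\<And>k. t k < 1 / real (Suc k)" "\<And>k. norm (w' k - w) < 1 / real (Suc k)"
    "\<And>k. x + t k *\<^sub>R d + (1/2 * (t k)\<^sup>2) *\<^sub>R w' k \<in> S"
    using f unfolding t_def w'_def by auto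
  have "w' \<longlonglongrightarrow> w" by (rule seq_close_tendsto[OF _ inv_suc_lim tendsto_const]) (use F(3) less_imp_le in auto)
  moreover have "t \<longlonglongrightarrow> 0" by (rule small_pos_lim[OF F(1,2)])
  ultimately show "w \<in> second_tangent_set S x d" unfolding second_tangent_set_def
    using F(1,4) by blast
qed

lemma asym_closed: "closed (asym_second_tangent_cone S x d)"
  unfolding closed_sequential_limits
proof (intro allI impI, elim conjE)
  fix W w assume W: "\<forall>n. W n \<in> asym_second_tangent_cone S x d" and Ww: "W \<longlonglongrightarrow> w"
  show "w \<in> asym_second_tangent_cone S x d" unfolding asym_char
  proof (intro allI impI)
    fix e :: real assume e: "e > 0"
    obtain n where n: "dist (W n) w < e/2" using tendstoD[OF Ww, of "e/2"] e
      unfolding eventually_sequentially by auto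
    obtain t r w' where h: "0 < t \<and> t < e/2 \<and> 0 < r \<and> r < e/2 \<and> t / r < e/2
      \<and> norm (w' - W n) < e/2 \<and> x + t *\<^sub>R d + (1/2 * t * r) *\<^sub>R w' \<in> S"
      using W[rule_format, of n, unfolded asym_char] e by (meson half_gt_zero)
    have "norm (w' - w) < e"
      using norm_triangle_ineq[of "w' - W n" "W n - w"] h n by (simp add: dist_norm)
    have trr: "t / r < e"
    proof -
      from h have "t / r < e / 2" by blast
      then show ?thesis using e by linarith
    qed
    show "\<exists>t r w'. 0 < t \<and> t < e \<and> 0 < r \<and> r < e \<and> t / r < e
      \<and> norm (w' - w) < e \<and> x + t *\<^sub>R d + (1/2 * t * r) *\<^sub>R w' \<in> S"
      by (rule exI[of _ t], rule exI[of _ r], rule exI[of _ w'], insert h trr \<open>norm (w' - w) < e\<close>, auto)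
  qed
qed

lemma second_closed: "closed (second_tangent_set S x d)"
  unfolding closed_sequential_limits
proof (intro allI impI, elim conjE)
  fix W w assume W: "\<forall>n. W n \<in> second_tangent_set S x d" and Ww: "W \<longlonglongrightarrow> w"
  show "w \<in> second_tangent_set S x d" unfolding second_char
  proof (intro allI impI)
    fix e :: real assume e: "e > 0"
    obtain n where n: "dist (W n) w < e/2" using tendstoD[OF Ww, of "e/2"] e
      unfolding eventually_sequentially by auto
    obtain t w' where h: "0 < t \<and> t < e/2
      \<and> norm (w' - W n) < e/2 \<and> x + t *\<^sub>R d + (1/2 * t\<^sup>2) *\<^sub>R w' \<in> S"
      using W[rule_format, of n, unfolded second_char] e by (meson half_gt_zero)
    have "norm (w' - w) < e"
      using norm_triangle_ineq[of "w' - W n" "W n - w"] h n by (simp add: dist_norm)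
    show "\<exists>t w'. 0 < t \<and> t < e \<and> norm (w' - w) < e \<and> x + t *\<^sub>R d + (1/2 * t\<^sup>2) *\<^sub>R w' \<in> S"
      by (rule exI[of _ t], rule exI[of _ w'], insert h \<open>norm (w' - w) < e\<close>, auto)
  qed
qed




context
  fixes g :: "'n::euclidean_space \<Rightarrow> 'm::euclidean_space"
    and Dg :: "'n \<Rightarrow> 'n \<Rightarrow> 'm"
    and D2g :: "'n \<Rightarrow> 'n \<Rightarrow> 'n \<Rightarrow> 'm"
  assumes D1: "\<And>x. (g has_derivative Dg x) (at x)"
    and D2: "\<And>x h. ((\<lambda>y. Dg y h) has_derivative (\<lambda>u. D2g x u h)) (at x)"
begin

lemma lin_Dg: "linear (Dg x)"
  using has_derivative_bounded_linear[OF D1[of x]] bounded_linear.linear by blast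

lemma lin_D2_1: "linear (\<lambda>u. D2g x u h)"
  using has_derivative_bounded_linear[OF D2[where x=x and h=h]] bounded_linear.linear by blast

lemma lin_D2_2: "linear (\<lambda>h. D2g x u h)"
proof (rule linearI)
  fix h1 h2
  have "((\<lambda>y. Dg y (h1 + h2)) has_derivative (\<lambda>u. D2g x u h1 + D2g x u h2)) (at x)"
  proof -
    have "((\<lambda>y. Dg y h1 + Dg y h2) has_derivative (\<lambda>u. D2g x u h1 + D2g x u h2)) (at x)"
      by (intro has_derivative_add D2)
    moreover have "(\<lambda>y. Dg y h1 + Dg y h2) = (\<lambda>y. Dg y (h1 + h2))"
      by (rule ext) (simp add: linear_add[OF lin_Dg])
    ultimately show ?thesis by simp
  qed
  from has_derivative_unique[OF D2[where x=x and h="h1 + h2"] this]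
  show "D2g x u (h1 + h2) = D2g x u h1 + D2g x u h2" by meson
next
  fix c :: real and h
  have "((\<lambda>y. Dg y (c *\<^sub>R h)) has_derivative (\<lambda>u. c *\<^sub>R D2g x u h)) (at x)"
  proof -
    have "((\<lambda>y. c *\<^sub>R Dg y h) has_derivative (\<lambda>u. c *\<^sub>R D2g x u h)) (at x)"
      by (intro has_derivative_scaleR_right D2)
    moreover have "(\<lambda>y. c *\<^sub>R Dg y h) = (\<lambda>y. Dg y (c *\<^sub>R h))"
      by (rule ext) (simp add: linear_scale[OF lin_Dg])
    ultimately show ?thesis by simp
  qed
  from has_derivative_unique[OF D2[where x=x and h="c *\<^sub>R h"] this]
  show "D2g x u (c *\<^sub>R h) = c *\<^sub>R D2g x u h" by meson
qed

lemma bil_D2: "bounded_bilinear (D2g x)"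
proof -
  have "bilinear (D2g x)" unfolding bilinear_def using lin_D2_1 lin_D2_2 by blast
  then show ?thesis using bilinear_conv_bounded_bilinear by blast
qed

lemma lin_repr:
  fixes f :: "'n \<Rightarrow> 'm"
  assumes "linear f"
  shows "f e = (\<Sum>i\<in>Basis. (e \<bullet> i) *\<^sub>R f i)"
proof -
  have "f e = f (\<Sum>i\<in>Basis. (e \<bullet> i) *\<^sub>R i)" by (simp add: euclidean_representation)
  also have "\<dots> = (\<Sum>i\<in>Basis. (e \<bullet> i) *\<^sub>R f i)"
    by (simp add: linear_sum[OF assms] linear_scale[OF assms])
  finally show ?thesis .
qed

lemma unif_diff:
  assumes e: "\<epsilon> > 0"
  shows "\<exists>\<delta>>0. \<forall>k e. norm k < \<delta> \<longrightarrow> norm (Dg (x + k) e - Dg x e - D2g x k e) \<le> \<epsilon> * norm k * norm e"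
proof -
  define \<epsilon>' where "\<epsilon>' = \<epsilon> / real DIM('n)"
  have e': "\<epsilon>' > 0" using e by (simp add: \<epsilon>'_def)
  have "\<forall>i\<in>Basis. eventually (\<lambda>k. norm (Dg (x + k) i - Dg x i - D2g x k i) \<le> \<epsilon>' * norm k) (nhds 0)"
  proof
    fix i :: 'n assume "i \<in> Basis"
    obtain d where d: "d > 0" "\<And>y. norm (y - x) < d \<Longrightarrow> norm (Dg y i - Dg x i - D2g x (y - x) i) \<le> \<epsilon>' * norm (y - x)"
      using D2[where x=x and h=i, unfolded has_derivative_at_alt] e' by blast
    show "eventually (\<lambda>k. norm (Dg (x + k) i - Dg x i - D2g x k i) \<le> \<epsilon>' * norm k) (nhds 0)"
      unfolding eventually_nhds_metric
    proof (intro exI[of _ d] conjI allI impI)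
      fix k :: 'n assume "dist k 0 < d"
      then show "norm (Dg (x + k) i - Dg x i - D2g x k i) \<le> \<epsilon>' * norm k" using d(2)[of "x + k"] by (simp add: dist_norm)
    qed (use d in auto)
  qed
  then have "eventually (\<lambda>k. \<forall>i\<in>Basis. norm (Dg (x + k) i - Dg x i - D2g x k i) \<le> \<epsilon>' * norm k) (nhds 0)"
    by (intro eventually_ball_finite) auto
  then obtain \<delta> where \<delta>: "\<delta> > 0" "\<And>k i. dist k 0 < \<delta> \<Longrightarrow> i \<in> Basis \<Longrightarrow> norm (Dg (x + k) i - Dg x i - D2g x k i) \<le> \<epsilon>' * norm k"
    unfolding eventually_nhds_metric by blast
  show ?thesis
  proof (intro exI[of _ \<delta>] conjI allI impI)
    show "\<delta> > 0" by fact
    fix k e :: 'n assume k: "norm k < \<delta>"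
    define f where "f e = Dg (x + k) e - Dg x e - D2g x k e" for e
    have lf: "linear f" unfolding f_def
      by (intro linear_compose_sub lin_Dg lin_D2_2)
    have PI: "norm ((e \<bullet> i) *\<^sub>R f i) \<le> norm e * (\<epsilon>' * norm k)" if i: "i \<in> Basis" for i
    proof -
      have "norm ((e \<bullet> i) *\<^sub>R f i) = \<bar>e \<bullet> i\<bar> * norm (f i)" by simp
      also have "\<dots> \<le> norm e * (\<epsilon>' * norm k)"
        using \<delta>(2)[of k i] k i Basis_le_norm[OF i, of e]
        by (intro mult_mono) (auto simp: f_def dist_norm)
      finally show ?thesis .
    qed
    have "norm (f e) = norm (\<Sum>i\<in>Basis. (e \<bullet> i) *\<^sub>R f i)" by (subst lin_repr[OF lf]) simp
    also have "\<dots> \<le> (\<Sum>i\<in>Basis. norm ((e \<bullet> i) *\<^sub>R f i))" by (rule norm_sum)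
    also have "\<dots> \<le> (\<Sum>i\<in>(Basis::'n set). norm e * (\<epsilon>' * norm k))"
      by (intro sum_mono) (use PI in blast)
    also have "\<dots> = \<epsilon> * norm k * norm e" by (simp add: \<epsilon>'_def)
    finally show "norm (Dg (x + k) e - Dg x e - D2g x k e) \<le> \<epsilon> * norm k * norm e" by (simp add: f_def)
  qed
qed

lemma taylor2:
  assumes e: "\<epsilon> > 0"
  shows "\<exists>\<delta>>0. \<forall>h. norm h < \<delta> \<longrightarrow> norm (g (x + h) - g x - Dg x h - (1/2) *\<^sub>R D2g x h h) \<le> \<epsilon> * (norm h)\<^sup>2"
proof -
  obtain \<delta> where \<delta>: "\<delta> > 0" "\<And>k e. norm k < \<delta> \<Longrightarrow> norm (Dg (x + k) e - Dg x e - D2g x k e) \<le> \<epsilon> * norm k * norm e"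
    using unif_diff[OF e] by blast
  show ?thesis
  proof (intro exI[of _ \<delta>] conjI allI impI)
    show "\<delta> > 0" by fact
    fix h :: 'n assume h: "norm h < \<delta>"
    define \<psi> where "\<psi> s = g (x + s *\<^sub>R h) - s *\<^sub>R Dg x h - (s\<^sup>2/2) *\<^sub>R D2g x h h" for s :: real
    define \<psi>' where "\<psi>' s = (\<lambda>\<tau>::real. \<tau> *\<^sub>R (Dg (x + s *\<^sub>R h) h - Dg x h - s *\<^sub>R D2g x h h))" for s :: real
    have der: "(\<psi> has_derivative \<psi>' s) (at s within T)" for s T
    proof -
      have h1: "((\<lambda>s. x + s *\<^sub>R h) has_derivative (\<lambda>\<tau>. \<tau> *\<^sub>R h)) (at s within T)"
        by (auto intro!: derivative_eq_intros)
      have h2: "((\<lambda>s. g (x + s *\<^sub>R h)) has_derivative (\<lambda>\<tau>. Dg (x + s *\<^sub>R h) (\<tau> *\<^sub>R h))) (at s within T)"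
        using has_derivative_compose[OF h1 D1] .
      have "(\<psi> has_derivative (\<lambda>\<tau>. Dg (x + s *\<^sub>R h) (\<tau> *\<^sub>R h) - \<tau> *\<^sub>R Dg x h - (2 * s * \<tau> / 2) *\<^sub>R D2g x h h)) (at s within T)"
        unfolding \<psi>_def
        by (auto intro!: derivative_eq_intros h2 simp: power2_eq_square algebra_simps)
      moreover have "(\<lambda>\<tau>. Dg (x + s *\<^sub>R h) (\<tau> *\<^sub>R h) - \<tau> *\<^sub>R Dg x h - (2 * s * \<tau> / 2) *\<^sub>R D2g x h h) = \<psi>' s"
        by (rule ext) (simp add: \<psi>'_def linear_scale[OF lin_Dg] algebra_simps)
      ultimately show ?thesis by simp
    qed
    have cont: "continuous_on {0..1} \<psi>" by (rule has_derivative_continuous_on) (rule der)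
    obtain s where s: "s \<in> {0<..<1}" "norm (\<psi> 1 - \<psi> 0) \<le> norm (\<psi>' s (1 - 0))"
      using mvt_general[of 0 1 \<psi> \<psi>'] cont der by auto
    have "\<psi> 1 - \<psi> 0 = g (x + h) - g x - Dg x h - (1/2) *\<^sub>R D2g x h h" by (simp add: \<psi>_def)
    moreover have "\<psi>' s (1 - 0) = Dg (x + s *\<^sub>R h) h - Dg x h - D2g x (s *\<^sub>R h) h"
      by (simp add: \<psi>'_def linear_scale[OF lin_D2_1])
    moreover have "norm (Dg (x + s *\<^sub>R h) h - Dg x h - D2g x (s *\<^sub>R h) h) \<le> \<epsilon> * norm (s *\<^sub>R h) * norm h"
    proof (rule \<delta>(2))
      have "s * norm h \<le> norm h" using s(1) by (intro mult_left_le_one_le) auto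
      then show "norm (s *\<^sub>R h) < \<delta>" using s(1) h by simp
    qed
    moreover have "\<epsilon> * norm (s *\<^sub>R h) * norm h \<le> \<epsilon> * (norm h)\<^sup>2"
      using s(1) e by (simp add: power2_eq_square mult_le_cancel_right2 mult_left_le_one_le mult.assoc)
    ultimately show "norm (g (x + h) - g x - Dg x h - (1/2) *\<^sub>R D2g x h h) \<le> \<epsilon> * (norm h)\<^sup>2" using s(2) by simp
  qed
qed

lemma norm_h_bound:
  fixes t \<sigma> Y :: real
  assumes "t \<ge> 0" "0 \<le> \<sigma>" "\<sigma> \<le> t" "norm yk \<le> Y"
  shows "norm (t *\<^sub>R d + \<sigma> *\<^sub>R yk) \<le> t * (norm d + Y)"
proof -
  have "norm (t *\<^sub>R d + \<sigma> *\<^sub>R yk) \<le> t * norm d + \<sigma> * norm yk"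
    using norm_triangle_ineq[of "t *\<^sub>R d" "\<sigma> *\<^sub>R yk"] assms by simp
  also have "\<sigma> * norm yk \<le> t * Y" using assms by (intro mult_mono) (auto intro: order_trans[OF norm_ge_zero])
  finally show ?thesis by (simp add: algebra_simps)
qed

lemma taylor_seq1:
  assumes t: "\<And>k. t k > 0" "t \<longlonglongrightarrow> 0" and r: "\<And>k. r k > 0" "r \<longlonglongrightarrow> 0"
    and tr: "(\<lambda>k. t k / r k) \<longlonglongrightarrow> 0" and y: "y \<longlonglongrightarrow> y0"
  shows "(\<lambda>k. (1 / (1/2 * t k * r k)) *\<^sub>R (g (x + t k *\<^sub>R d + (1/2 * t k * r k) *\<^sub>R y k) - g x
            - t k *\<^sub>R Dg x d - (1/2 * t k * r k) *\<^sub>R Dg x (y k))) \<longlonglongrightarrow> 0"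
proof -
  define \<sigma> where "\<sigma> k = 1/2 * t k * r k" for k
  define h where "h k = t k *\<^sub>R d + \<sigma> k *\<^sub>R y k" for k
  obtain Y where Y: "\<And>k. norm (y k) \<le> Y" using BseqE[OF convergent_imp_Bseq[OF convergentI[OF y]]] by blast
  obtain KB where KB: "\<And>a b. norm (D2g x a b) \<le> norm a * norm b * KB" "KB > 0"
    using bounded_bilinear.pos_bounded[OF bil_D2[of x]] by blast
  obtain \<delta> where \<delta>: "\<delta> > 0" "\<And>h. norm h < \<delta> \<Longrightarrow> norm (g (x + h) - g x - Dg x h - (1/2) *\<^sub>R D2g x h h) \<le> 1 * (norm h)\<^sup>2"
    using taylor2[of 1] by auto
  define C where "C = norm d + Y"
  have \<sigma>lim: "\<sigma> \<longlonglongrightarrow> 0" unfolding \<sigma>_def using tendsto_mult[OF tendsto_mult[OF tendsto_const[of "1/2::real"] t(2)] r(2)] by simp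
  have hlim: "h \<longlonglongrightarrow> 0" unfolding h_def
    using tendsto_add[OF tendsto_scaleR[OF t(2) tendsto_const] tendsto_scaleR[OF \<sigma>lim y]] by simp
  have ev1: "eventually (\<lambda>k. dist (h k) 0 < \<delta>) sequentially" using hlim \<delta>(1) by (rule tendstoD)
  have ev2: "eventually (\<lambda>k. dist (r k) 0 < 1) sequentially" using r(2) by (rule tendstoD) simp
  show ?thesis
  proof (rule Lim_null_comparison)
    show "eventually (\<lambda>k. norm ((1 / (1/2 * t k * r k)) *\<^sub>R (g (x + t k *\<^sub>R d + (1/2 * t k * r k) *\<^sub>R y k) - g x
            - t k *\<^sub>R Dg x d - (1/2 * t k * r k) *\<^sub>R Dg x (y k))) \<le> ((2 + KB) * C\<^sup>2) * (t k / r k)) sequentially"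
      using ev1 ev2
    proof eventually_elim
      case (elim k)
      have hk: "norm (h k) < \<delta>" using elim by simp
      have rk: "r k < 1" using elim r(1)[of k] by simp
      have s1: "\<sigma> k \<le> t k" using rk t(1)[of k] r(1)[of k] by (simp add: \<sigma>_def)
      have s0: "0 < \<sigma> k" using t(1)[of k] r(1)[of k] by (simp add: \<sigma>_def)
      have nh: "norm (h k) \<le> t k * C" unfolding h_def C_def
        by (rule norm_h_bound) (use s1 s0 t(1)[of k] Y in auto)
      have eq: "g (x + t k *\<^sub>R d + \<sigma> k *\<^sub>R y k) - g x - t k *\<^sub>R Dg x d - \<sigma> k *\<^sub>R Dg x (y k)
          = (g (x + h k) - g x - Dg x (h k) - (1/2) *\<^sub>R D2g x (h k) (h k)) + (1/2) *\<^sub>R D2g x (h k) (h k)"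
        by (simp add: h_def linear_add[OF lin_Dg] linear_scale[OF lin_Dg] add.assoc)
      have "norm (g (x + t k *\<^sub>R d + \<sigma> k *\<^sub>R y k) - g x - t k *\<^sub>R Dg x d - \<sigma> k *\<^sub>R Dg x (y k))
          \<le> (norm (h k))\<^sup>2 + (1/2) * (norm (h k) * norm (h k) * KB)"
        unfolding eq using \<delta>(2)[OF hk] KB(1)[of "h k" "h k"]
        by (intro order_trans[OF norm_triangle_ineq]) simp
      also have "\<dots> = (1 + KB/2) * (norm (h k))\<^sup>2" by (simp add: power2_eq_square algebra_simps)
      also have "\<dots> \<le> (1 + KB/2) * (t k * C)\<^sup>2"
        using nh KB(2) by (intro mult_left_mono power_mono) auto
      finally have n1: "norm (g (x + t k *\<^sub>R d + \<sigma> k *\<^sub>R y k) - g x - t k *\<^sub>R Dg x d - \<sigma> k *\<^sub>R Dg x (y k))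
          \<le> (1 + KB/2) * (t k * C)\<^sup>2" .
      have "norm ((1 / \<sigma> k) *\<^sub>R (g (x + t k *\<^sub>R d + \<sigma> k *\<^sub>R y k) - g x - t k *\<^sub>R Dg x d - \<sigma> k *\<^sub>R Dg x (y k)))
          \<le> (1 / \<sigma> k) * ((1 + KB/2) * (t k * C)\<^sup>2)"
        using n1 s0 by (simp add: divide_right_mono)
      also have "\<dots> = ((2 + KB) * C\<^sup>2) * (t k / r k)"
        using t(1)[of k] r(1)[of k] by (simp add: \<sigma>_def power2_eq_square field_simps)
      finally show ?case by (simp add: \<sigma>_def)
    qed
    show "(\<lambda>k. ((2 + KB) * C\<^sup>2) * (t k / r k)) \<longlonglongrightarrow> 0"
      using tendsto_mult[OF tendsto_const tr] by simp
  qed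
qed

lemma taylor_seq2:
  assumes t: "\<And>k. t k > 0" "t \<longlonglongrightarrow> 0" and y: "y \<longlonglongrightarrow> y0"
  shows "(\<lambda>k. (1 / (1/2 * (t k)\<^sup>2)) *\<^sub>R (g (x + t k *\<^sub>R d + (1/2 * (t k)\<^sup>2) *\<^sub>R y k) - g x
            - t k *\<^sub>R Dg x d - (1/2 * (t k)\<^sup>2) *\<^sub>R (Dg x (y k) + D2g x d d))) \<longlonglongrightarrow> 0"
proof -
  define \<sigma> where "\<sigma> k = 1/2 * (t k)\<^sup>2" for k
  define h where "h k = t k *\<^sub>R d + \<sigma> k *\<^sub>R y k" for k
  define P1 where "P1 k = (1 / \<sigma> k) *\<^sub>R (g (x + h k) - g x - Dg x (h k) - (1/2) *\<^sub>R D2g x (h k) (h k))" for k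
  define P2 where "P2 k = (1/2) *\<^sub>R (t k *\<^sub>R (D2g x d (y k) + D2g x (y k) d) + \<sigma> k *\<^sub>R D2g x (y k) (y k))" for k
  have bil: "bounded_bilinear (D2g x)" by (rule bil_D2)
  have s0: "\<sigma> k > 0" for k using t(1)[of k] by (simp add: \<sigma>_def)
  have eq: "(1 / \<sigma> k) *\<^sub>R (g (x + t k *\<^sub>R d + \<sigma> k *\<^sub>R y k) - g x
            - t k *\<^sub>R Dg x d - \<sigma> k *\<^sub>R (Dg x (y k) + D2g x d d)) = P1 k + P2 k" for k
  proof -
    have B: "(1/2) *\<^sub>R D2g x (h k) (h k) = \<sigma> k *\<^sub>R D2g x d d + (1/2 * t k * \<sigma> k) *\<^sub>R (D2g x d (y k) + D2g x (y k) d)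
        + (1/2 * (\<sigma> k)\<^sup>2) *\<^sub>R D2g x (y k) (y k)"
      unfolding h_def
      by (simp add: bounded_bilinear.add_left[OF bil] bounded_bilinear.add_right[OF bil]
          bounded_bilinear.scaleR_left[OF bil] bounded_bilinear.scaleR_right[OF bil]
          \<sigma>_def power2_eq_square scaleR_add_right algebra_simps)
    have A: "Dg x (h k) = t k *\<^sub>R Dg x d + \<sigma> k *\<^sub>R Dg x (y k)"
      by (simp add: h_def linear_add[OF lin_Dg] linear_scale[OF lin_Dg])
    have "g (x + t k *\<^sub>R d + \<sigma> k *\<^sub>R y k) - g x - t k *\<^sub>R Dg x d - \<sigma> k *\<^sub>R (Dg x (y k) + D2g x d d)
       = (g (x + h k) - g x - Dg x (h k) - (1/2) *\<^sub>R D2g x (h k) (h k))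
         + ((1/2 * t k * \<sigma> k) *\<^sub>R (D2g x d (y k) + D2g x (y k) d) + (1/2 * (\<sigma> k)\<^sup>2) *\<^sub>R D2g x (y k) (y k))"
      unfolding A B by (simp add: h_def add.assoc scaleR_add_right algebra_simps)
    also have "(1 / \<sigma> k) *\<^sub>R \<dots> = P1 k + P2 k"
      using s0[of k] by (simp add: P1_def P2_def scaleR_add_right power2_eq_square field_simps)
    finally show ?thesis .
  qed
  have \<sigma>lim: "\<sigma> \<longlonglongrightarrow> 0" unfolding \<sigma>_def using tendsto_mult[OF tendsto_const[of "1/2::real"] tendsto_power[OF t(2), of 2]] by simp
  have P2lim: "P2 \<longlonglongrightarrow> 0"
  proof -
    have "P2 \<longlonglongrightarrow> (1/2) *\<^sub>R (0 *\<^sub>R (D2g x d y0 + D2g x y0 d) + 0 *\<^sub>R D2g x y0 y0)"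
      unfolding P2_def
      by (intro tendsto_intros t(2) \<sigma>lim bounded_bilinear.tendsto[OF bil] y)
    then show ?thesis by simp
  qed
  obtain Y where Y: "\<And>k. norm (y k) \<le> Y" using BseqE[OF convergent_imp_Bseq[OF convergentI[OF y]]] by blast
  define C where "C = norm d + Y"
  have hlim: "h \<longlonglongrightarrow> 0" unfolding h_def
    using tendsto_add[OF tendsto_scaleR[OF t(2) tendsto_const] tendsto_scaleR[OF \<sigma>lim y]] by simp
  have P1lim: "P1 \<longlonglongrightarrow> 0"
  proof (rule tendstoI)
    fix \<epsilon> :: real assume e: "\<epsilon> > 0"
    define \<epsilon>' where "\<epsilon>' = \<epsilon> / (2 * C\<^sup>2 + 1)"
    have e': "\<epsilon>' > 0" using e by (simp add: \<epsilon>'_def add_nonneg_pos)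
    obtain \<delta> where \<delta>: "\<delta> > 0" "\<And>h. norm h < \<delta> \<Longrightarrow> norm (g (x + h) - g x - Dg x h - (1/2) *\<^sub>R D2g x h h) \<le> \<epsilon>' * (norm h)\<^sup>2"
      using taylor2[OF e'] by auto
    have ev1: "eventually (\<lambda>k. dist (h k) 0 < \<delta>) sequentially" using hlim \<delta>(1) by (rule tendstoD)
    have ev2: "eventually (\<lambda>k. dist (t k) 0 < 1) sequentially" using t(2) by (rule tendstoD) simp
    show "eventually (\<lambda>k. dist (P1 k) 0 < \<epsilon>) sequentially"
      using ev1 ev2
    proof eventually_elim
      case (elim k)
      have hk: "norm (h k) < \<delta>" using elim by simp
      have tk: "t k < 1" using elim t(1)[of k] by simp
      have s1: "\<sigma> k \<le> t k" using tk t(1)[of k] by (simp add: \<sigma>_def power2_eq_square mult_left_le_one_le)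
      have nh: "norm (h k) \<le> t k * C" unfolding h_def C_def
        by (rule norm_h_bound) (use s1 s0[of k] t(1)[of k] Y in auto)
      have "norm (P1 k) \<le> (1 / \<sigma> k) * (\<epsilon>' * (norm (h k))\<^sup>2)"
        unfolding P1_def using \<delta>(2)[OF hk] s0[of k] by (simp add: divide_right_mono)
      also have "\<dots> \<le> (1 / \<sigma> k) * (\<epsilon>' * (t k * C)\<^sup>2)"
        using nh e' s0[of k] by (intro mult_left_mono power_mono) auto
      also have "\<dots> = 2 * \<epsilon>' * C\<^sup>2"
        using t(1)[of k] by (simp add: \<sigma>_def power2_eq_square field_simps)
      also have "\<dots> < \<epsilon>"
      proof -
        have nz: "2 * C\<^sup>2 + 1 \<noteq> 0" using zero_le_power2[of C] by linarith
        have "\<epsilon>' * (2 * C\<^sup>2 + 1) = \<epsilon>" using nz by (simp add: \<epsilon>'_def)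
        then show ?thesis using e' by (simp add: algebra_simps)
      qed
      finally show ?case by simp
    qed
  qed
  have "(\<lambda>k. P1 k + P2 k) \<longlonglongrightarrow> 0 + 0" by (intro tendsto_add P1lim P2lim)
  then show ?thesis using eq by (simp add: \<sigma>_def)
qed

end



lemma dir_nbhd_ev:
  fixes u :: "nat \<Rightarrow> 'a::real_normed_vector"
  assumes t: "\<And>k. t k > 0" "t \<longlonglongrightarrow> 0" and u: "u \<longlonglongrightarrow> d" and \<rho>: "\<rho> > 0" and \<delta>: "\<delta> > 0"
  shows "eventually (\<lambda>k. t k *\<^sub>R u k \<in> dir_nbhd \<rho> \<delta> d) sequentially"
proof -
  have "(\<lambda>k. t k *\<^sub>R u k) \<longlonglongrightarrow> 0 *\<^sub>R d" by (intro tendsto_scaleR t(2) u)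
  then have lim0: "(\<lambda>k. t k *\<^sub>R u k) \<longlonglongrightarrow> 0" by simp
  have ev1: "eventually (\<lambda>k. dist (t k *\<^sub>R u k) 0 < \<delta>) sequentially" by (rule tendstoD[OF lim0 \<delta>])
  have ev2: "eventually (\<lambda>k. norm (norm d *\<^sub>R u k - norm (u k) *\<^sub>R d) \<le> \<rho> * norm (u k) * norm d) sequentially"
  proof (cases "d = 0")
    case True then show ?thesis by simp
  next
    case False
    have "(\<lambda>k. norm (norm d *\<^sub>R u k - norm (u k) *\<^sub>R d) - \<rho> * norm (u k) * norm d)
       \<longlonglongrightarrow> norm (norm d *\<^sub>R d - norm d *\<^sub>R d) - \<rho> * norm d * norm d"
      by (intro tendsto_intros u)
    moreover have "norm (norm d *\<^sub>R d - norm d *\<^sub>R d) - \<rho> * norm d * norm d < 0"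
      using False \<rho> by simp
    ultimately have "eventually (\<lambda>k. norm (norm d *\<^sub>R u k - norm (u k) *\<^sub>R d) - \<rho> * norm (u k) * norm d < 0) sequentially"
      by (rule order_tendstoD(2))
    then show ?thesis by eventually_elim simp
  qed
  from ev1 ev2 show ?thesis
  proof eventually_elim
    case (elim k)
    have tk: "t k > 0" by (rule t(1))
    have "norm d *\<^sub>R (t k *\<^sub>R u k) - norm (t k *\<^sub>R u k) *\<^sub>R d = t k *\<^sub>R (norm d *\<^sub>R u k - norm (u k) *\<^sub>R d)"
      using tk by (simp add: algebra_simps)
    then have "norm (norm d *\<^sub>R (t k *\<^sub>R u k) - norm (t k *\<^sub>R u k) *\<^sub>R d) = t k * norm (norm d *\<^sub>R u k - norm (u k) *\<^sub>R d)"
      using tk by simp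
    also have "\<dots> \<le> t k * (\<rho> * norm (u k) * norm d)" using elim(2) tk by (intro mult_left_mono) auto
    also have "\<dots> = \<rho> * norm (t k *\<^sub>R u k) * norm d" using tk by simp
    finally show ?case using elim(1) unfolding dir_nbhd_def by (simp add: dist_norm less_imp_le)
  qed
qed

lemma gen_err:
  fixes g :: "'n::euclidean_space \<Rightarrow> 'm::euclidean_space"
  assumes Cc: "closed (g -` K)" and xK: "xbar \<in> g -` K"
    and EBd: "\<And>w. w \<in> dir_nbhd \<rho> \<delta> d \<Longrightarrow> infdist (xbar + w) (g -` K) \<le> \<kappa> * infdist (g (xbar + w)) K"
    and \<rho>: "\<rho> > 0" and \<delta>: "\<delta> > 0" and k0: "\<kappa> \<ge> 0"
    and t: "\<And>k. t k > 0" "t \<longlonglongrightarrow> 0" and \<sigma>: "\<And>k. \<sigma> k > 0" "(\<lambda>k. \<sigma> k / t k) \<longlonglongrightarrow> 0"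
    and q: "q \<longlonglongrightarrow> q0" and qK: "\<And>k. g xbar + t k *\<^sub>R Ad + \<sigma> k *\<^sub>R q k \<in> K"
    and tay: "(\<lambda>k. (1 / \<sigma> k) *\<^sub>R (g (xbar + t k *\<^sub>R d + \<sigma> k *\<^sub>R y) - g xbar - t k *\<^sub>R Ad - \<sigma> k *\<^sub>R p)) \<longlonglongrightarrow> 0"
  shows "\<exists>r ys y'. strict_mono r \<and> (ys \<circ> r) \<longlonglongrightarrow> y' \<and> norm (y' - y) \<le> \<kappa> * norm (p - q0)
           \<and> (\<forall>k. xbar + t k *\<^sub>R d + \<sigma> k *\<^sub>R ys k \<in> g -` K)"
proof -
  define C where "C = g -` K"
  define x where "x k = xbar + t k *\<^sub>R d + \<sigma> k *\<^sub>R y" for k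
  have Cne: "C \<noteq> {}" using xK by (auto simp: C_def)
  have "\<exists>c. c \<in> C \<and> infdist (x k) C = dist (x k) c" for k
    using infdist_attains_inf[OF Cc[folded C_def] Cne, of "x k"] by blast
  then obtain c where c: "\<And>k. c k \<in> C" "\<And>k. infdist (x k) C = dist (x k) (c k)"
    using choice[of "\<lambda>k c. c \<in> C \<and> infdist (x k) C = dist (x k) c"] by blast
  define ys where "ys k = y + (1 / \<sigma> k) *\<^sub>R (c k - x k)" for k
  have mem: "xbar + t k *\<^sub>R d + \<sigma> k *\<^sub>R ys k \<in> g -` K" for k
  proof -
    have "xbar + t k *\<^sub>R d + \<sigma> k *\<^sub>R ys k = c k"
      using \<sigma>(1)[of k] by (simp add: ys_def x_def scaleR_add_right algebra_simps)
    then show ?thesis using c(1)[of k] by (simp add: C_def)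
  qed
  define e where "e k = (1 / \<sigma> k) *\<^sub>R (g (xbar + t k *\<^sub>R d + \<sigma> k *\<^sub>R y) - g xbar - t k *\<^sub>R Ad - \<sigma> k *\<^sub>R p)" for k
  define R where "R k = \<kappa> * norm (e k + p - q k)" for k
  have Rlim: "R \<longlonglongrightarrow> \<kappa> * norm (0 + p - q0)" unfolding R_def
    using tay[folded e_def] by (intro tendsto_intros q)
  have evd: "eventually (\<lambda>k. t k *\<^sub>R (d + (\<sigma> k / t k) *\<^sub>R y) \<in> dir_nbhd \<rho> \<delta> d) sequentially"
  proof (rule dir_nbhd_ev[OF t _ \<rho> \<delta>])
    show "(\<lambda>k. d + (\<sigma> k / t k) *\<^sub>R y) \<longlonglongrightarrow> d"
      using tendsto_add[OF tendsto_const[of d] tendsto_scaleR[OF \<sigma>(2) tendsto_const[of y]]] by simp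
  qed
  have evb: "eventually (\<lambda>k. norm (ys k - y) \<le> R k) sequentially"
    using evd
  proof eventually_elim
    case (elim k)
    have tk: "t k > 0" "\<sigma> k > 0" using t(1) \<sigma>(1) by auto
    have xk: "x k = xbar + t k *\<^sub>R (d + (\<sigma> k / t k) *\<^sub>R y)"
      using tk by (simp add: x_def scaleR_add_right)
    have "infdist (x k) C \<le> \<kappa> * infdist (g (x k)) K"
      unfolding xk C_def by (rule EBd[OF elim])
    also have "infdist (g (x k)) K \<le> dist (g (x k)) (g xbar + t k *\<^sub>R Ad + \<sigma> k *\<^sub>R q k)"
      by (rule infdist_le[OF qK])
    also have "\<dots> = \<sigma> k * norm (e k + p - q k)"
    proof -
      have "g (x k) - (g xbar + t k *\<^sub>R Ad + \<sigma> k *\<^sub>R q k) = \<sigma> k *\<^sub>R (e k + p - q k)"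
        using tk by (simp add: e_def x_def scaleR_add_right scaleR_diff_right algebra_simps)
      then show ?thesis using tk by (simp add: dist_norm)
    qed
    finally have "infdist (x k) C \<le> \<kappa> * (\<sigma> k * norm (e k + p - q k))" using k0 by (simp add: mult_left_mono)
    moreover have "norm (ys k - y) = infdist (x k) C / \<sigma> k"
      using c(2)[of k] tk by (simp add: ys_def dist_norm norm_minus_commute)
    ultimately show ?case using tk by (simp add: R_def divide_le_eq algebra_simps)
  qed
  then obtain N where N: "\<And>k. k \<ge> N \<Longrightarrow> norm (ys k - y) \<le> R k" unfolding eventually_sequentially by blast
  obtain Rb where Rb: "\<And>k. norm (R k) \<le> Rb" using BseqE[OF convergent_imp_Bseq[OF convergentI[OF Rlim]]] by blast
  define Z where "Z k = ys (k + N)" for k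
  have "norm (Z k) \<le> norm y + Rb" for k
  proof -
    have "norm (Z k) \<le> norm y + norm (Z k - y)" using norm_triangle_ineq[of y "Z k - y"] by simp
    moreover have "norm (Z k - y) \<le> R (k + N)" unfolding Z_def by (rule N) simp
    moreover have "R (k + N) \<le> Rb" using Rb[of "k + N"] by simp
    ultimately show ?thesis by simp
  qed
  then have "bounded (range Z)" unfolding bounded_iff by blast
  then obtain y' r where r: "strict_mono r" "(Z \<circ> r) \<longlonglongrightarrow> y'"
    using bounded_imp_convergent_subsequence by blast
  define r' where "r' k = r k + N" for k
  have r': "strict_mono r'" using r(1) by (simp add: strict_mono_def r'_def)
  have Zr: "(ys \<circ> r') \<longlonglongrightarrow> y'" using r(2) by (simp add: o_def Z_def r'_def)
  have Rr: "(R \<circ> r') \<longlonglongrightarrow> \<kappa> * norm (0 + p - q0)" using LIMSEQ_subseq_LIMSEQ[OF Rlim r'] .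
  have "(\<lambda>k. norm ((ys \<circ> r') k - y)) \<longlonglongrightarrow> norm (y' - y)" by (intro tendsto_intros Zr)
  then have "norm (y' - y) \<le> \<kappa> * norm (0 + p - q0)"
  proof (rule LIMSEQ_le[OF _ Rr])
    show "\<exists>N. \<forall>n\<ge>N. norm ((ys \<circ> r') n - y) \<le> (R \<circ> r') n"
      using N by (auto simp: r'_def)
  qed
  then show ?thesis using r' Zr mem by auto
qed




context
  fixes g :: "'n::euclidean_space \<Rightarrow> 'm::euclidean_space"
    and Dg :: "'n \<Rightarrow> 'n \<Rightarrow> 'm"
    and D2g :: "'n \<Rightarrow> 'n \<Rightarrow> 'n \<Rightarrow> 'm"
    and K :: "'m set" and xbar d :: 'n
  assumes D1: "\<And>x. (g has_derivative Dg x) (at x)"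
    and D2: "\<And>x h. ((\<lambda>y. Dg y h) has_derivative (\<lambda>u. D2g x u h)) (at x)"
    and Kc: "closed K" and xK: "xbar \<in> g -` K"
begin

lemma Cc: "closed (g -` K)"
  using continuous_closed_vimage[OF Kc] has_derivative_continuous[OF D1] by blast

lemma incl_asym:
  assumes v: "v \<in> asym_second_tangent_cone (g -` K) xbar d"
  shows "Dg xbar v \<in> asym_second_tangent_cone K (g xbar) (Dg xbar d)"
proof -
  obtain t r v' where h: "\<And>k. t k > 0" "\<And>k. r k > 0" "t \<longlonglongrightarrow> 0" "r \<longlonglongrightarrow> 0"
    "(\<lambda>k. t k / r k) \<longlonglongrightarrow> 0" "v' \<longlonglongrightarrow> v" "\<And>k. xbar + t k *\<^sub>R d + (1/2 * t k * r k) *\<^sub>R v' k \<in> g -` K"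
    using v unfolding asym_second_tangent_cone_def by blast
  define e where "e k = (1 / (1/2 * t k * r k)) *\<^sub>R (g (xbar + t k *\<^sub>R d + (1/2 * t k * r k) *\<^sub>R v' k) - g xbar
            - t k *\<^sub>R Dg xbar d - (1/2 * t k * r k) *\<^sub>R Dg xbar (v' k))" for k
  have e: "e \<longlonglongrightarrow> 0" unfolding e_def by (rule taylor_seq1[OF D1 D2 h(1,3,2,4,5,6)])
  define q where "q k = Dg xbar (v' k) + e k" for k
  have bl: "bounded_linear (Dg xbar)" using has_derivative_bounded_linear[OF D1] .
  have "q \<longlonglongrightarrow> Dg xbar v + 0" unfolding q_def by (intro tendsto_add e bounded_linear.tendsto[OF bl] h(6))
  moreover have "g xbar + t k *\<^sub>R Dg xbar d + (1/2 * t k * r k) *\<^sub>R q k \<in> K" for k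
  proof -
    have pos: "1/2 * t k * r k > 0" using h(1,2)[of k] by simp
    have "g xbar + t k *\<^sub>R Dg xbar d + (1/2 * t k * r k) *\<^sub>R q k = g (xbar + t k *\<^sub>R d + (1/2 * t k * r k) *\<^sub>R v' k)"
      using pos h(1)[of k] h(2)[of k] by (simp add: q_def e_def scaleR_add_right scaleR_diff_right)
    then show ?thesis using h(7)[of k] by simp
  qed
  ultimately show ?thesis unfolding asym_second_tangent_cone_def using h(1-5)
    by (intro CollectI exI[of _ t] exI[of _ r] exI[of _ q]) auto
qed

lemma incl_second:
  assumes v: "v \<in> second_tangent_set (g -` K) xbar d"
  shows "Dg xbar v + D2g xbar d d \<in> second_tangent_set K (g xbar) (Dg xbar d)"
proof -
  obtain t v' where h: "\<And>k. t k > 0" "t \<longlonglongrightarrow> 0"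
    "v' \<longlonglongrightarrow> v" "\<And>k. xbar + t k *\<^sub>R d + (1/2 * (t k)\<^sup>2) *\<^sub>R v' k \<in> g -` K"
    using v unfolding second_tangent_set_def by blast
  define e where "e k = (1 / (1/2 * (t k)\<^sup>2)) *\<^sub>R (g (xbar + t k *\<^sub>R d + (1/2 * (t k)\<^sup>2) *\<^sub>R v' k) - g xbar
            - t k *\<^sub>R Dg xbar d - (1/2 * (t k)\<^sup>2) *\<^sub>R (Dg xbar (v' k) + D2g xbar d d))" for k
  have e: "e \<longlonglongrightarrow> 0" unfolding e_def by (rule taylor_seq2[OF D1 D2 h(1,2,3)])
  define q where "q k = Dg xbar (v' k) + D2g xbar d d + e k" for k
  have bl: "bounded_linear (Dg xbar)" using has_derivative_bounded_linear[OF D1] .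
  have "q \<longlonglongrightarrow> Dg xbar v + D2g xbar d d + 0" unfolding q_def
    by (intro tendsto_add e tendsto_const bounded_linear.tendsto[OF bl] h(3))
  moreover have "g xbar + t k *\<^sub>R Dg xbar d + (1/2 * (t k)\<^sup>2) *\<^sub>R q k \<in> K" for k
  proof -
    have pos: "1/2 * (t k)\<^sup>2 > 0" using h(1)[of k] by simp
    have "g xbar + t k *\<^sub>R Dg xbar d + (1/2 * (t k)\<^sup>2) *\<^sub>R q k = g (xbar + t k *\<^sub>R d + (1/2 * (t k)\<^sup>2) *\<^sub>R v' k)"
      using pos by (simp add: q_def e_def scaleR_add_right scaleR_diff_right)
    then show ?thesis using h(4)[of k] by simp
  qed
  ultimately show ?thesis unfolding second_tangent_set_def using h(1,2)
    by (intro CollectI exI[of _ t] exI[of _ q]) auto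
qed

lemma eb_asym:
  assumes EBd: "\<And>w. w \<in> dir_nbhd \<rho> \<delta> d \<Longrightarrow> infdist (xbar + w) (g -` K) \<le> \<kappa> * infdist (g (xbar + w)) K"
    and \<rho>: "\<rho> > 0" and \<delta>: "\<delta> > 0" and k0: "\<kappa> \<ge> 0"
    and Qne: "asym_second_tangent_cone K (g xbar) (Dg xbar d) \<noteq> {}"
  shows "infdist y (asym_second_tangent_cone (g -` K) xbar d) \<le> \<kappa> * infdist (Dg xbar y) (asym_second_tangent_cone K (g xbar) (Dg xbar d))"
proof -
  define Q where "Q = asym_second_tangent_cone K (g xbar) (Dg xbar d)"
  obtain q where q: "q \<in> Q" "infdist (Dg xbar y) Q = dist (Dg xbar y) q"
    using infdist_attains_inf[OF asym_closed Qne[folded Q_def, unfolded Q_def]] unfolding Q_def by blast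
  obtain t r qs where h: "\<forall>k. t k > 0" "\<forall>k. r k > 0" "t \<longlonglongrightarrow> 0" "r \<longlonglongrightarrow> 0"
    "(\<lambda>k. t k / r k) \<longlonglongrightarrow> 0" "qs \<longlonglongrightarrow> q" "\<forall>k. g xbar + t k *\<^sub>R Dg xbar d + (1/2 * t k * r k) *\<^sub>R qs k \<in> K"
    using q(1) unfolding Q_def asym_second_tangent_cone_def by blast
  have sig: "(\<lambda>k. (1/2 * t k * r k) / t k) \<longlonglongrightarrow> 0"
  proof -
    have eqf: "(\<lambda>k. (1/2 * t k * r k) / t k) = (\<lambda>k. (1/2) * r k)"
    proof (rule ext)
      fix k show "(1/2 * t k * r k) / t k = (1/2) * r k" using h(1)[rule_format, of k] by (simp add: field_simps)
    qed
    have "(\<lambda>k. (1/2) * r k) \<longlonglongrightarrow> (1/2) * 0" by (intro tendsto_intros h(4))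
    then show ?thesis unfolding eqf by simp
  qed
  have tay: "(\<lambda>k. (1 / (1/2 * t k * r k)) *\<^sub>R (g (xbar + t k *\<^sub>R d + (1/2 * t k * r k) *\<^sub>R y) - g xbar
            - t k *\<^sub>R Dg xbar d - (1/2 * t k * r k) *\<^sub>R Dg xbar y)) \<longlonglongrightarrow> 0"
    by (rule taylor_seq1[OF D1 D2 h(1)[rule_format] h(3) h(2)[rule_format] h(4) h(5) tendsto_const])
  obtain r' ys y' where g: "strict_mono r'" "(ys \<circ> r') \<longlonglongrightarrow> y'" "norm (y' - y) \<le> \<kappa> * norm (Dg xbar y - q)"
      "\<forall>k. xbar + t k *\<^sub>R d + (1/2 * t k * r k) *\<^sub>R ys k \<in> g -` K"
  proof -
    have sp: "0 < 1/2 * t k * r k" for k using h(1)[rule_format, of k] h(2)[rule_format, of k] by simp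
    show ?thesis using gen_err[OF Cc xK EBd \<rho> \<delta> k0 h(1)[rule_format] h(3) sp sig h(6) h(7)[rule_format] tay] that by blast
  qed
  have "y' \<in> asym_second_tangent_cone (g -` K) xbar d"
    unfolding asym_second_tangent_cone_def
  proof (rule CollectI, rule exI[of _ "t \<circ> r'"], rule exI[of _ "r \<circ> r'"], rule exI[of _ "ys \<circ> r'"], intro conjI allI)
    show "(t \<circ> r') \<longlonglongrightarrow> 0" by (rule LIMSEQ_subseq_LIMSEQ[OF h(3) g(1)])
    show "(r \<circ> r') \<longlonglongrightarrow> 0" by (rule LIMSEQ_subseq_LIMSEQ[OF h(4) g(1)])
    show "(\<lambda>k. (t \<circ> r') k / (r \<circ> r') k) \<longlonglongrightarrow> 0" using LIMSEQ_subseq_LIMSEQ[OF h(5) g(1)] by (simp add: o_def)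
    show "(ys \<circ> r') \<longlonglongrightarrow> y'" by (rule g(2))
    fix k
    show "0 < (t \<circ> r') k" "0 < (r \<circ> r') k" using h(1,2) by auto
    show "xbar + (t \<circ> r') k *\<^sub>R d + (1 / 2 * (t \<circ> r') k * (r \<circ> r') k) *\<^sub>R (ys \<circ> r') k \<in> g -` K"
      using g(4) by simp
  qed
  then have "infdist y (asym_second_tangent_cone (g -` K) xbar d) \<le> dist y y'" by (rule infdist_le)
  also have "\<dots> \<le> \<kappa> * norm (Dg xbar y - q)" using g(3) by (simp add: dist_norm norm_minus_commute)
  also have "\<dots> = \<kappa> * infdist (Dg xbar y) Q" using q(2) by (simp add: dist_norm)
  finally show ?thesis by (simp add: Q_def)
qed

lemma eb_second:
  assumes EBd: "\<And>w. w \<in> dir_nbhd \<rho> \<delta> d \<Longrightarrow> infdist (xbar + w) (g -` K) \<le> \<kappa> * infdist (g (xbar + w)) K"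
    and \<rho>: "\<rho> > 0" and \<delta>: "\<delta> > 0" and k0: "\<kappa> \<ge> 0"
    and Qne: "second_tangent_set K (g xbar) (Dg xbar d) \<noteq> {}"
  shows "infdist y (second_tangent_set (g -` K) xbar d) \<le> \<kappa> * infdist (Dg xbar y + D2g xbar d d) (second_tangent_set K (g xbar) (Dg xbar d))"
proof -
  define Q where "Q = second_tangent_set K (g xbar) (Dg xbar d)"
  obtain q where q: "q \<in> Q" "infdist (Dg xbar y + D2g xbar d d) Q = dist (Dg xbar y + D2g xbar d d) q"
    using infdist_attains_inf[OF second_closed Qne[folded Q_def, unfolded Q_def]] unfolding Q_def by blast
  obtain t qs where h: "\<forall>k. t k > 0" "t \<longlonglongrightarrow> 0"
    "qs \<longlonglongrightarrow> q" "\<forall>k. g xbar + t k *\<^sub>R Dg xbar d + (1/2 * (t k)\<^sup>2) *\<^sub>R qs k \<in> K"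
    using q(1) unfolding Q_def second_tangent_set_def by blast
  have sig: "(\<lambda>k. (1/2 * (t k)\<^sup>2) / t k) \<longlonglongrightarrow> 0"
  proof -
    have eqf: "(\<lambda>k. (1/2 * (t k)\<^sup>2) / t k) = (\<lambda>k. (1/2) * t k)"
    proof (rule ext)
      fix k show "(1/2 * (t k)\<^sup>2) / t k = (1/2) * t k" using h(1)[rule_format, of k] by (simp add: power2_eq_square field_simps)
    qed
    have "(\<lambda>k. (1/2) * t k) \<longlonglongrightarrow> (1/2) * 0" by (intro tendsto_intros h(2))
    then show ?thesis unfolding eqf by simp
  qed
  have tay: "(\<lambda>k. (1 / (1/2 * (t k)\<^sup>2)) *\<^sub>R (g (xbar + t k *\<^sub>R d + (1/2 * (t k)\<^sup>2) *\<^sub>R y) - g xbar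
            - t k *\<^sub>R Dg xbar d - (1/2 * (t k)\<^sup>2) *\<^sub>R (Dg xbar y + D2g xbar d d))) \<longlonglongrightarrow> 0"
    by (rule taylor_seq2[OF D1 D2 h(1)[rule_format] h(2) tendsto_const])
  obtain r' ys y' where g: "strict_mono r'" "(ys \<circ> r') \<longlonglongrightarrow> y'" "norm (y' - y) \<le> \<kappa> * norm (Dg xbar y + D2g xbar d d - q)"
      "\<forall>k. xbar + t k *\<^sub>R d + (1/2 * (t k)\<^sup>2) *\<^sub>R ys k \<in> g -` K"
  proof -
    have sp: "0 < 1/2 * (t k)\<^sup>2" for k using h(1)[rule_format, of k] by simp
    show ?thesis using gen_err[OF Cc xK EBd \<rho> \<delta> k0 h(1)[rule_format] h(2) sp sig h(3) h(4)[rule_format] tay] that by blast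
  qed
  have "y' \<in> second_tangent_set (g -` K) xbar d"
    unfolding second_tangent_set_def
  proof (intro CollectI exI[of _ "t \<circ> r'"] exI[of _ "ys \<circ> r'"] conjI allI)
    show "(t \<circ> r') \<longlonglongrightarrow> 0" by (rule LIMSEQ_subseq_LIMSEQ[OF h(2) g(1)])
    show "(ys \<circ> r') \<longlonglongrightarrow> y'" by (rule g(2))
    fix k
    show "0 < (t \<circ> r') k" using h(1) by auto
    show "xbar + (t \<circ> r') k *\<^sub>R d + (1 / 2 * ((t \<circ> r') k)\<^sup>2) *\<^sub>R (ys \<circ> r') k \<in> g -` K"
      using g(4) by simp
  qed
  then have "infdist y (second_tangent_set (g -` K) xbar d) \<le> dist y y'" by (rule infdist_le)
  also have "\<dots> \<le> \<kappa> * norm (Dg xbar y + D2g xbar d d - q)" using g(3) by (simp add: dist_norm norm_minus_commute)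
  also have "\<dots> = \<kappa> * infdist (Dg xbar y + D2g xbar d d) Q" using q(2) by (simp add: dist_norm)
  finally show ?thesis by (simp add: Q_def)
qed

end



lemma final_gen:
  fixes A :: "'a::euclidean_space \<Rightarrow> 'b::euclidean_space"
  assumes lin: "linear A" and Qc: "closed Q" and Sc: "closed S"
    and SQ: "\<And>y. y \<in> S \<Longrightarrow> A y + b \<in> Q"
    and EBs: "\<And>k. \<kappa>s k \<ge> 0" "\<And>k y. infdist y S \<le> \<kappa>s k * infdist (A y + b) Q"
    and \<kappa>lim: "\<kappa>s \<longlonglongrightarrow> \<kappa>0"
    and z: "z \<in> limiting_normal_cone S v"
  shows "\<exists>l \<in> limiting_normal_cone Q (A v + b) \<inter> cball 0 (\<kappa>0 * norm z). z = adjoint A l"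
proof -
  have "\<exists>l \<in> limiting_normal_cone Q (A v + b). norm l \<le> \<kappa>s k * norm z \<and> z = adjoint A l" for k
    by (rule lim_good[OF lin Qc Sc EBs(2) EBs(1) SQ z])
  then obtain L where L: "\<And>k. L k \<in> limiting_normal_cone Q (A v + b)" "\<And>k. norm (L k) \<le> \<kappa>s k * norm z"
    "\<And>k. z = adjoint A (L k)"
    using choice[of "\<lambda>k l. l \<in> limiting_normal_cone Q (A v + b) \<and> norm l \<le> \<kappa>s k * norm z \<and> z = adjoint A l"] by blast
  have M: "(\<lambda>k. \<kappa>s k * norm z) \<longlonglongrightarrow> \<kappa>0 * norm z" by (intro tendsto_intros \<kappa>lim)
  have ad: "(\<lambda>k. adjoint A (L k)) \<longlonglongrightarrow> z" using L(3) by (simp flip: L(3))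
  obtain l where "l \<in> limiting_normal_cone Q (A v + b)" "norm l \<le> \<kappa>0 * norm z" "z = adjoint A l"
    using lnc_closed_graph[OF lin Qc tendsto_const L(1) L(2) M ad] by blast
  then show ?thesis by auto
qed

theorem proposition2p8:
  fixes g :: "'n::euclidean_space \<Rightarrow> 'm::euclidean_space"
    and Dg :: "'n \<Rightarrow> 'n \<Rightarrow> 'm"
    and D2g :: "'n \<Rightarrow> 'n \<Rightarrow> 'n \<Rightarrow> 'm"
    and K :: "'m set" and xbar d :: 'n and \<kappa> :: real
  assumes D1: "\<And>x. (g has_derivative Dg x) (at x)"
    and D2: "\<And>x h. ((\<lambda>y. Dg y h) has_derivative (\<lambda>u. D2g x u h)) (at x)"
    and D2_cont: "\<And>u h. continuous_on UNIV (\<lambda>x. D2g x u h)"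
    and K_closed: "closed K"
    and xbar_in: "xbar \<in> g -` K"
    and d_tan: "d \<in> tangent_cone (g -` K) xbar"
    and mscq: "mscq_dir g K xbar d"
    and kappa: "\<kappa> = mscq_modulus g K xbar d"
  shows "(\<forall>v \<in> asym_second_tangent_cone (g -` K) xbar d.
            limiting_normal_cone (asym_second_tangent_cone (g -` K) xbar d) v
            \<subseteq> {z. \<exists>lam \<in> limiting_normal_cone (asym_second_tangent_cone K (g xbar) (Dg xbar d)) (Dg xbar v)
                           \<inter> cball 0 (\<kappa> * norm z).
                    z = adjoint (Dg xbar) lam})
       \<and> (\<forall>w \<in> second_tangent_set (g -` K) xbar d.
            limiting_normal_cone (second_tangent_set (g -` K) xbar d) w
            \<subseteq> {z. \<exists>lam \<in> limiting_normal_cone (second_tangent_set K (g xbar) (Dg xbar d))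
                                  (Dg xbar w + D2g xbar d d)
                           \<inter> cball 0 (\<kappa> * norm z).
                    z = adjoint (Dg xbar) lam})"
proof -
  define Ks where "Ks = mscq_constants g K xbar d"
  have Kne: "Ks \<noteq> {}" using mscq by (simp add: mscq_dir_def Ks_def)
  have Kpos: "k > 0" if "k \<in> Ks" for k using that by (simp add: Ks_def mscq_constants_def)
  have bdd: "bdd_below Ks" unfolding bdd_below_def using Kpos less_imp_le by blast
  have kap: "\<kappa> = Inf Ks" by (simp add: kappa mscq_modulus_def Ks_def)
  have "\<exists>k'. k' \<in> Ks \<and> k' < \<kappa> + 1 / real (Suc k)" for k
  proof -
    have "Inf Ks < \<kappa> + 1 / real (Suc k)" using kap by simp
    then show ?thesis using cInf_less_iff[OF Kne bdd] by blast
  qed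
  then obtain \<kappa>s where \<kappa>s: "\<And>k. \<kappa>s k \<in> Ks" "\<And>k. \<kappa>s k < \<kappa> + 1 / real (Suc k)"
    using choice[of "\<lambda>k k'. k' \<in> Ks \<and> k' < \<kappa> + 1 / real (Suc k)"] by blast
  have low: "\<kappa> \<le> \<kappa>s k" for k using cInf_lower[OF \<kappa>s(1) bdd] kap by simp
  have \<kappa>lim: "\<kappa>s \<longlonglongrightarrow> \<kappa>"
  proof (rule seq_close_tendsto[OF _ inv_suc_lim tendsto_const])
    fix k
    have "0 \<le> \<kappa>s k - \<kappa>" "\<kappa>s k - \<kappa> \<le> 1 / real (Suc k)" using low[of k] \<kappa>s(2)[of k] by linarith+
    then show "norm (\<kappa>s k - \<kappa>) \<le> 1 / real (Suc k)" by simp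
  qed
  have EBdata: "\<exists>\<rho>>0. \<exists>\<delta>>0. \<forall>w\<in>dir_nbhd \<rho> \<delta> d. infdist (xbar + w) (g -` K) \<le> \<kappa>s k * infdist (g (xbar + w)) K" for k
    using \<kappa>s(1)[of k] by (simp add: Ks_def mscq_constants_def)
  have \<kappa>s0: "\<kappa>s k \<ge> 0" for k using Kpos[OF \<kappa>s(1)] less_imp_le by blast
  have lin: "linear (Dg xbar)" using has_derivative_bounded_linear[OF D1[of xbar]] bounded_linear.linear by blast
  show ?thesis
  proof (intro conjI ballI subsetI)
    fix v z
    assume vS: "v \<in> asym_second_tangent_cone (g -` K) xbar d"
      and z: "z \<in> limiting_normal_cone (asym_second_tangent_cone (g -` K) xbar d) v"
    have Qne: "asym_second_tangent_cone K (g xbar) (Dg xbar d) \<noteq> {}"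
      using incl_asym[OF D1 D2 K_closed xbar_in vS] by blast
    have EB: "infdist y (asym_second_tangent_cone (g -` K) xbar d) \<le> \<kappa>s k * infdist (Dg xbar y + 0) (asym_second_tangent_cone K (g xbar) (Dg xbar d))" for k y
    proof -
      obtain \<rho> \<delta> where rd: "\<rho> > 0" "\<delta> > 0" and EBd: "\<And>w. w \<in> dir_nbhd \<rho> \<delta> d \<Longrightarrow> infdist (xbar + w) (g -` K) \<le> \<kappa>s k * infdist (g (xbar + w)) K"
        using EBdata[of k] by blast
      from eb_asym[OF D1 D2 K_closed xbar_in EBd rd \<kappa>s0[of k] Qne] show ?thesis by simp
    qed
    have "\<exists>l \<in> limiting_normal_cone (asym_second_tangent_cone K (g xbar) (Dg xbar d)) (Dg xbar v + 0) \<inter> cball 0 (\<kappa> * norm z). z = adjoint (Dg xbar) l"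
      by (rule final_gen[OF lin asym_closed asym_closed _ \<kappa>s0 EB \<kappa>lim z])
         (simp add: incl_asym[OF D1 D2 K_closed xbar_in])
    then show "z \<in> {z. \<exists>lam \<in> limiting_normal_cone (asym_second_tangent_cone K (g xbar) (Dg xbar d)) (Dg xbar v)
                           \<inter> cball 0 (\<kappa> * norm z). z = adjoint (Dg xbar) lam}" by simp
  next
    fix v z
    assume vS: "v \<in> second_tangent_set (g -` K) xbar d"
      and z: "z \<in> limiting_normal_cone (second_tangent_set (g -` K) xbar d) v"
    have Qne: "second_tangent_set K (g xbar) (Dg xbar d) \<noteq> {}"
      using incl_second[OF D1 D2 K_closed xbar_in vS] by blast
    have EB: "infdist y (second_tangent_set (g -` K) xbar d) \<le> \<kappa>s k * infdist (Dg xbar y + D2g xbar d d) (second_tangent_set K (g xbar) (Dg xbar d))" for k y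
    proof -
      obtain \<rho> \<delta> where rd: "\<rho> > 0" "\<delta> > 0" and EBd: "\<And>w. w \<in> dir_nbhd \<rho> \<delta> d \<Longrightarrow> infdist (xbar + w) (g -` K) \<le> \<kappa>s k * infdist (g (xbar + w)) K"
        using EBdata[of k] by blast
      from eb_second[OF D1 D2 K_closed xbar_in EBd rd \<kappa>s0[of k] Qne] show ?thesis by simp
    qed
    have "\<exists>l \<in> limiting_normal_cone (second_tangent_set K (g xbar) (Dg xbar d)) (Dg xbar v + D2g xbar d d) \<inter> cball 0 (\<kappa> * norm z). z = adjoint (Dg xbar) l"
      by (rule final_gen[OF lin second_closed second_closed _ \<kappa>s0 EB \<kappa>lim z])
         (simp add: incl_second[OF D1 D2 K_closed xbar_in])
    then show "z \<in> {z. \<exists>lam \<in> limiting_normal_cone (second_tangent_set K (g xbar) (Dg xbar d))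
                                  (Dg xbar v + D2g xbar d d)
                           \<inter> cball 0 (\<kappa> * norm z). z = adjoint (Dg xbar) lam}" by simp
  qed
qed


end
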